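(* A quasi-order is unary FA-presentable if and only if it is isomorphic to one obtained by propagating a unary FA-foundational quasi-order $(Q,\le)$ in which every seed $P_k=\{p^{(k)}_1,\dots,p^{(k)}_5\}$ is either an anti-chain (no two distinct $p^{(k)}_i$ are comparable), an ascending chain ($p^{(k)}_1<p^{(k)}_2<p^{(k)}_3<p^{(k)}_4<p^{(k)}_5$), a descending chain ($p^{(k)}_1>p^{(k)}_2>p^{(k)}_3>p^{(k)}_4>p^{(k)}_5$), or a strongly connected component ($p^{(k)}_i\le p^{(k)}_j$ for all $i,j\in\{1,\dots,5\}$).
   Context: A quasi-order is a reflexive transitive binary relation; $x<y$ means $x\le y$ and not $y\le x$. A structure is unary FA-presentable if there exist a regular language $L\subseteq a^*$ and a surjection $\phi:L\to X$ such that for equality and for the relation, the set of pairs $(u,v)\in L^2$ whose images are related is regular (i.e. the set of words $\mathrm{conv}(u,v)$ over $\{a,\$\}^2$, reading both words in parallel with the shorter padded by $\$$, is a regular language). A unary FA-foundational binary relation is a finite set $Q$ with a relation $\rho$ and pairwise disjoint five-element subsets (seeds) $P_k=\{p^{(k)}_1,\dots,p^{(k)}_5\}$, $0\le k\le n-1$ ($n\ge0$), such that with $Q'=Q\setminus\bigcup_k P_k$, for all $k,l$ (possibly equal) and $q\in Q'$: (1) the statements $p^{(k)}_i\rho p^{(l)}_i$ ($1\le i\le5$) are all true or all false; (2) the statements $p^{(k)}_i\rho p^{(l)}_{i+1}$ ($1\le i\le4$) are all true or all false; (3) the statements $p^{(k)}_{i+1}\rho p^{(l)}_i$ ($1\le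 i\le 4$) are all true or all false; (4) the statements $p^{(k)}_i\rho p^{(l)}_j$ with $j-i\ge2$ are all true or all false; (5) the statements $p^{(k)}_j\rho p^{(l)}_i$ with $j-i\ge2$ are all true or all false; (6) the statements $q\rho p^{(k)}_i$ ($2\le i\le5$) are all true or all false; (7) the statements $p^{(k)}_i\rho q$ ($2\le i\le 5$) are all true or all false. A unary FA-foundational quasi-order is one in which $\rho$ is a quasi-order on $Q$. Propagation yields $(\hat Q,\hat\rho)$ with $\hat Q=Q'\cup\{p^{(k)}_i:0\le k<n,\ i\in\mathbb{N}\}$ ($\mathbb{N}=\{1,2,\dots\}$, new elements for $i\ge6$) and: $\hat\rho=\rho$ on $Q'$; $p^{(k)}_i\hat\rho p^{(l)}_j$ iff [$j=i$ and $p^{(k)}_1\rho p^{(l)}_1$] or [$j=i+1$ and $p^{(k)}_1\rho p^{(l)}_2$] or [$j=i-1$ and $p^{(k)}_2\rho p^{(l)}_1$] or [$j\ge i+2$ and $p^{(k)}_1\rho p^{(l)}_3$] or [$j\le i-2$ and $p^{(k)}_3\rho p^{(l)}_1$]; for $q\in Q'$: $q\hat\rho p^{(k)}_1$ iff $q\rho p^{(k)}_1$, $q\hat\rho p^{(k)}_i$ ($i\ge2$) iff $q\rho p^{(k)}_2$, $p^{(k)}_1\hat\rho q$ iff $p^{(k)}_1\rho q$, $p^{(k)}_i\hat\rho q$ ($i\ge2$) iff $p^{(k)}_2\rho q$. *)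

theory Defs
  imports Main
begin

definition regular_lang :: "'c list set \<Rightarrow> bool" where
  "regular_lang L \<longleftrightarrow>
     (\<exists>(S::nat set) (\<delta>::nat \<Rightarrow> 'c \<Rightarrow> nat) q0 F.
        finite S \<and> q0 \<in> S \<and> (\<forall>q\<in>S. \<forall>c. \<delta> q c \<in> S) \<and> F \<subseteq> S \<and>
        L = {w. foldl \<delta> q0 w \<in> F})"

text \<open>Unary words a^n are identified with natural numbers n. In the convolution alphabet, a padded letter is a boolean
(True = a, False = the padding symbol \$); a convolution letter is a pair.\<close>

definition unary_word :: "nat \<Rightarrow> unit list" where
  "unary_word n = replicate n ()"

definition conv :: "nat \<Rightarrow> nat \<Rightarrow> (bool \<times> bool) list" where
  "conv m n = map (\<lambda>i. (i < m, i < n)) [0..<max m n]"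

definition unary_FA_presentable :: "'a set \<Rightarrow> ('a \<Rightarrow> 'a \<Rightarrow> bool) \<Rightarrow> bool" where
  "unary_FA_presentable X R \<longleftrightarrow>
     (\<exists>(L::nat set) (\<phi>::nat \<Rightarrow> 'a).
        regular_lang (unary_word ` L) \<and> \<phi> ` L = X \<and>
        regular_lang {conv u v | u v. u \<in> L \<and> v \<in> L \<and> \<phi> u = \<phi> v} \<and>
        regular_lang {conv u v | u v. u \<in> L \<and> v \<in> L \<and> R (\<phi> u) (\<phi> v)})"

definition quasi_order_on :: "'a set \<Rightarrow> ('a \<Rightarrow> 'a \<Rightarrow> bool) \<Rightarrow> bool" where
  "quasi_order_on X R \<longleftrightarrow>
     (\<forall>x\<in>X. R x x) \<and> (\<forall>x\<in>X. \<forall>y\<in>X. \<forall>z\<in>X. R x y \<longrightarrow> R y z \<longrightarrow> R x z)"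

definition strictly :: "('a \<Rightarrow> 'a \<Rightarrow> bool) \<Rightarrow> 'a \<Rightarrow> 'a \<Rightarrow> bool" where
  "strictly R x y \<longleftrightarrow> R x y \<and> \<not> R y x"

definition isomorphic ::
  "'a set \<Rightarrow> ('a \<Rightarrow> 'a \<Rightarrow> bool) \<Rightarrow> 'b set \<Rightarrow> ('b \<Rightarrow> 'b \<Rightarrow> bool) \<Rightarrow> bool" where
  "isomorphic X R Y S \<longleftrightarrow>
     (\<exists>f. bij_betw f X Y \<and> (\<forall>x\<in>X. \<forall>y\<in>X. R x y \<longleftrightarrow> S (f x) (f y)))"

text \<open>Elements of Q are encoded in the type nat + nat \<times> nat: the non-seed part Q'
consists of elements Inl q (q in a finite set Q' of naturals), and the seed
element p^(k)_i is Inr (k, i). This is the same as an arbitrary finite Q with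
pairwise disjoint five-element labelled seeds, up to renaming.\<close>

type_synonym elt = "nat + nat \<times> nat"

abbreviation seed :: "nat \<Rightarrow> nat \<Rightarrow> elt" where
  "seed k i \<equiv> Inr (k, i)"

definition found_carrier :: "nat set \<Rightarrow> nat \<Rightarrow> elt set" where
  "found_carrier Q' n = Inl ` Q' \<union> {seed k i | k i. k < n \<and> 1 \<le> i \<and> i \<le> 5}"

definition FA_foundational :: "nat set \<Rightarrow> nat \<Rightarrow> (elt \<Rightarrow> elt \<Rightarrow> bool) \<Rightarrow> bool" where
  "FA_foundational Q' n \<rho> \<longleftrightarrow> finite Q' \<and>
    (\<forall>k<n. \<forall>l<n.
      (\<forall>i\<in>{1..5}. \<forall>j\<in>{1..5}. \<rho> (seed k i) (seed l i) = \<rho> (seed k j) (seed l j)) \<and>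
      (\<forall>i\<in>{1..4}. \<forall>j\<in>{1..4}.
          \<rho> (seed k i) (seed l (i+1)) = \<rho> (seed k j) (seed l (j+1))) \<and>
      (\<forall>i\<in>{1..4}. \<forall>j\<in>{1..4}.
          \<rho> (seed k (i+1)) (seed l i) = \<rho> (seed k (j+1)) (seed l j)) \<and>
      (\<forall>i\<in>{1..5}. \<forall>j\<in>{1..5}. \<forall>i'\<in>{1..5}. \<forall>j'\<in>{1..5}.
          i + 2 \<le> j \<longrightarrow> i' + 2 \<le> j' \<longrightarrow>
          \<rho> (seed k i) (seed l j) = \<rho> (seed k i') (seed l j')) \<and>
      (\<forall>i\<in>{1..5}. \<forall>j\<in>{1..5}. \<forall>i'\<in>{1..5}. \<forall>j'\<in>{1..5}.
          i + 2 \<le> j \<longrightarrow> i' + 2 \<le> j' \<longrightarrow>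
          \<rho> (seed k j) (seed l i) = \<rho> (seed k j') (seed l i'))) \<and>
    (\<forall>k<n. \<forall>q\<in>Q'. \<forall>i\<in>{2..5}. \<forall>j\<in>{2..5}.
      \<rho> (Inl q) (seed k i) = \<rho> (Inl q) (seed k j) \<and>
      \<rho> (seed k i) (Inl q) = \<rho> (seed k j) (Inl q))"

definition FA_foundational_quasi_order :: "nat set \<Rightarrow> nat \<Rightarrow> (elt \<Rightarrow> elt \<Rightarrow> bool) \<Rightarrow> bool" where
  "FA_foundational_quasi_order Q' n \<rho> \<longleftrightarrow>
     FA_foundational Q' n \<rho> \<and> quasi_order_on (found_carrier Q' n) \<rho>"

definition prop_carrier :: "nat set \<Rightarrow> nat \<Rightarrow> elt set" where
  "prop_carrier Q' n = Inl ` Q' \<union> {seed k i | k i. k < n \<and> 1 \<le> i}"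

fun prop_rel :: "(elt \<Rightarrow> elt \<Rightarrow> bool) \<Rightarrow> elt \<Rightarrow> elt \<Rightarrow> bool" where
  "prop_rel \<rho> (Inl q) (Inl q') = \<rho> (Inl q) (Inl q')"
| "prop_rel \<rho> (Inr (k, i)) (Inr (l, j)) =
     ((j = i \<and> \<rho> (seed k 1) (seed l 1)) \<or>
      (j = i + 1 \<and> \<rho> (seed k 1) (seed l 2)) \<or>
      (j + 1 = i \<and> \<rho> (seed k 2) (seed l 1)) \<or>
      (i + 2 \<le> j \<and> \<rho> (seed k 1) (seed l 3)) \<or>
      (j + 2 \<le> i \<and> \<rho> (seed k 3) (seed l 1)))"
| "prop_rel \<rho> (Inl q) (Inr (k, i)) =
     (if i = 1 then \<rho> (Inl q) (seed k 1) else \<rho> (Inl q) (seed k 2))"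
| "prop_rel \<rho> (Inr (k, i)) (Inl q) =
     (if i = 1 then \<rho> (seed k 1) (Inl q) else \<rho> (seed k 2) (Inl q))"

definition seed_antichain :: "(elt \<Rightarrow> elt \<Rightarrow> bool) \<Rightarrow> nat \<Rightarrow> bool" where
  "seed_antichain \<rho> k \<longleftrightarrow>
     (\<forall>i\<in>{1..5}. \<forall>j\<in>{1..5}. i \<noteq> j \<longrightarrow> \<not> \<rho> (seed k i) (seed k j))"

definition seed_ascending :: "(elt \<Rightarrow> elt \<Rightarrow> bool) \<Rightarrow> nat \<Rightarrow> bool" where
  "seed_ascending \<rho> k \<longleftrightarrow> (\<forall>i\<in>{1..4}. strictly \<rho> (seed k i) (seed k (i+1)))"

definition seed_descending :: "(elt \<Rightarrow> elt \<Rightarrow> bool) \<Rightarrow> nat \<Rightarrow> bool" where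
  "seed_descending \<rho> k \<longleftrightarrow> (\<forall>i\<in>{1..4}. strictly \<rho> (seed k (i+1)) (seed k i))"

definition seed_scc :: "(elt \<Rightarrow> elt \<Rightarrow> bool) \<Rightarrow> nat \<Rightarrow> bool" where
  "seed_scc \<rho> k \<longleftrightarrow> (\<forall>i\<in>{1..5}. \<forall>j\<in>{1..5}. \<rho> (seed k i) (seed k j))"

end

theory Submission
  imports Defs
begin

definition kap :: "nat \<Rightarrow> nat \<Rightarrow> nat \<Rightarrow> nat" where
  "kap T P x = (if x < T then x else T + (x - T) mod P)"

definition stp :: "nat \<Rightarrow> nat \<Rightarrow> nat \<Rightarrow> nat" where
  "stp T P y = (if Suc y < T + P then Suc y else T)"

lemma mod_eq_shift:
  fixes a b T P :: nat
  shows "((a + T) mod P = (b + T) mod P) \<longleftrightarrow> (a mod P = b mod P)"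
proof (cases "a \<le> b")
  case True
  then show ?thesis using mod_eq_dvd_iff_nat[of a b P] mod_eq_dvd_iff_nat[of "a+T" "b+T" P] by auto
next
  case False
  then show ?thesis using mod_eq_dvd_iff_nat[of b a P] mod_eq_dvd_iff_nat[of "b+T" "a+T" P] by auto
qed

lemma mod_sub_cong:
  fixes x y T P :: nat
  assumes "T \<le> x" "T \<le> y"
  shows "((x - T) mod P = (y - T) mod P) \<longleftrightarrow> (x mod P = y mod P)"
  using mod_eq_shift[of "x - T" T P "y - T"] assms by simp

lemma kap_lt: "0 < P \<Longrightarrow> kap T P x < T + P"
  by (simp add: kap_def)

lemma kap_0[simp]: "kap T P 0 = 0"
  by (simp add: kap_def)

lemma kap_eq_iff:
  assumes "0 < P"
  shows "kap T P x = kap T P y \<longleftrightarrow> x = y \<or> (T \<le> x \<and> T \<le> y \<and> x mod P = y mod P)"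
proof (cases "x < T")
  case True
  then show ?thesis by (auto simp: kap_def)
next
  case False
  note F = this
  show ?thesis
  proof (cases "y < T")
    case True
    then show ?thesis using F by (auto simp: kap_def)
  next
    case False
    then show ?thesis using F mod_sub_cong[of T x y P] by (auto simp: kap_def)
  qed
qed

lemma kap_eqI: "T \<le> x \<Longrightarrow> T \<le> y \<Longrightarrow> x mod P = y mod P \<Longrightarrow> kap T P x = kap T P y"
  using mod_sub_cong[of T x y P] by (auto simp: kap_def)

lemma kap_Suc:
  assumes "0 < P"
  shows "kap T P (Suc x) = stp T P (kap T P x)"
proof (cases "Suc x < T")
  case True then show ?thesis by (simp add: kap_def stp_def)
next
  case False
  show ?thesis
  proof (cases "x < T")
    case True
    then have "x = T - 1" "T > 0" using False by auto
    then show ?thesis using assms True False by (simp add: kap_def stp_def)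
  next
    case False
    then have e: "Suc x - T = Suc (x - T)" by simp
    show ?thesis using False assms
      apply (simp add: kap_def stp_def e mod_Suc)
      using mod_less_divisor[OF assms, of "x - T"] by linarith
  qed
qed

lemma kap_mono:
  assumes "0 < P" "0 < P'" "T \<le> T'" "P dvd P'" "kap T' P' x = kap T' P' y"
  shows "kap T P x = kap T P y"
proof -
  have "x = y \<or> (T' \<le> x \<and> T' \<le> y \<and> x mod P' = y mod P')"
    using assms kap_eq_iff by blast
  then have "x = y \<or> (T \<le> x \<and> T \<le> y \<and> x mod P = y mod P)"
    using assms(3,4) by (metis le_trans mod_mod_cancel)
  then show ?thesis using kap_eq_iff[OF assms(1)] by blast
qed

lemma kap_add:
  assumes "0 < P" "kap T P x = kap T P x'" "kap T P y = kap T P y'"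
  shows "kap T P (x + y) = kap T P (x' + y')"
proof -
  have a: "x = x' \<or> (T \<le> x \<and> T \<le> x' \<and> x mod P = x' mod P)"
    using assms kap_eq_iff by blast
  have b: "y = y' \<or> (T \<le> y \<and> T \<le> y' \<and> y mod P = y' mod P)"
    using assms kap_eq_iff by blast
  from a b have "x + y = x' + y' \<or> (T \<le> x + y \<and> T \<le> x' + y' \<and> (x + y) mod P = (x' + y') mod P)"
    by (auto intro: mod_add_cong)
  then show ?thesis using kap_eq_iff[OF assms(1)] by blast
qed

lemma kap_ge: "T \<le> x \<Longrightarrow> T \<le> kap T P x"
  by (simp add: kap_def)

lemma kap_less: "x < T \<Longrightarrow> kap T P x = x"
  by (simp add: kap_def)

lemma regI:
  fixes S :: "'s set" and \<delta> :: "'s \<Rightarrow> 'c \<Rightarrow> 's"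
  assumes "finite S" "q0 \<in> S" "\<forall>q\<in>S. \<forall>c. \<delta> q c \<in> S" "F \<subseteq> S"
    "L = {w. foldl \<delta> q0 w \<in> F}"
  shows "regular_lang L"
proof -
  obtain f :: "'s \<Rightarrow> nat" and m where f: "f ` S = {i. i < m}" "inj_on f S"
    using finite_imp_inj_to_nat_seg[OF assms(1)] by blast
  define g where "g = the_inv_into S f"
  have gf: "\<And>q. q \<in> S \<Longrightarrow> g (f q) = q" using f(2) by (simp add: g_def the_inv_into_f_f)
  define \<delta>' where "\<delta>' = (\<lambda>q c. f (\<delta> (g q) c))"
  have fold: "q \<in> S \<Longrightarrow> foldl \<delta>' (f q) w = f (foldl \<delta> q w)" for q w
  proof (induction w arbitrary: q)
    case Nil then show ?case by simp
  next
    case (Cons c w)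
    have "\<delta> q c \<in> S" using Cons.prems assms(3) by blast
    then show ?case using Cons by (simp add: \<delta>'_def gf)
  qed
  have fS: "\<And>q w. q \<in> S \<Longrightarrow> foldl \<delta> q w \<in> S"
  proof -
    fix q w show "q \<in> S \<Longrightarrow> foldl \<delta> q w \<in> S"
      by (induction w arbitrary: q) (use assms(3) in auto)
  qed
  have "L = {w. foldl \<delta>' (f q0) w \<in> f ` F}"
    unfolding assms(5) fold[OF assms(2)]
    using fS[OF assms(2)] assms(4) f(2) by (auto simp: inj_on_image_mem_iff)
  moreover have "finite (f ` S)" "f q0 \<in> f ` S" "\<forall>q\<in>f ` S. \<forall>c. \<delta>' q c \<in> f ` S" "f ` F \<subseteq> f ` S"
    using assms by (auto simp: \<delta>'_def gf)
  ultimately show ?thesis unfolding regular_lang_def by blast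
qed

lemma foldl_replicate: "foldl \<delta> q (replicate k c) = ((\<lambda>q. \<delta> q c) ^^ k) q"
  by (induction k arbitrary: q) (simp_all add: funpow_Suc_right del: funpow.simps)

lemma conv_decomp:
  "conv m n = replicate (min m n) (True, True) @ replicate (m - n) (True, False) @ replicate (n - m) (False, True)"
proof (cases "m \<le> n")
  case True
  have u: "[0..<n] = [0..<m] @ [m..<n]" using True upt_add_eq_append[of 0 m "n - m"] by simp
  have a: "map (\<lambda>i. (i < m, i < n)) [0..<m] = replicate m (True, True)"
    proof -
    have "map (\<lambda>i. (i < m, i < n)) [0..<m] = map (\<lambda>i. (True, True)) [0..<m]"
      using True by (intro map_cong) auto
    then show ?thesis by (simp add: map_replicate_const)
  qed
  have b: "map (\<lambda>i. (i < m, i < n)) [m..<n] = replicate (n - m) (False, True)"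
  proof -
    have "map (\<lambda>i. (i < m, i < n)) [m..<n] = map (\<lambda>i. (False, True)) [m..<n]"
      by (intro map_cong) auto
    then show ?thesis by (simp add: map_replicate_const)
  qed
  show ?thesis using True by (simp add: conv_def max_def u a b)
next
  case False
  have u: "[0..<m] = [0..<n] @ [n..<m]" using False upt_add_eq_append[of 0 n "m - n"] by simp
  have a: "map (\<lambda>i. (i < m, i < n)) [0..<n] = replicate n (True, True)"
    proof -
    have "map (\<lambda>i. (i < m, i < n)) [0..<n] = map (\<lambda>i. (True, True)) [0..<n]"
      using False by (intro map_cong) auto
    then show ?thesis by (simp add: map_replicate_const)
  qed
  have b: "map (\<lambda>i. (i < m, i < n)) [n..<m] = replicate (m - n) (True, False)"
  proof -
    have "map (\<lambda>i. (i < m, i < n)) [n..<m] = map (\<lambda>i. (True, False)) [n..<m]"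
      using False by (intro map_cong) auto
    then show ?thesis by (simp add: map_replicate_const)
  qed
  show ?thesis using False by (simp add: conv_def max_def u a b)
qed

lemma length_conv[simp]: "length (conv m n) = max m n"
  by (simp add: conv_def)

lemma conv_nth: "i < max m n \<Longrightarrow> conv m n ! i = (i < m, i < n)"
  by (simp add: conv_def)

lemma conv_inj:
  assumes "conv m n = conv m' n'"
  shows "m = m' \<and> n = n'"
proof -
  have L: "max m n = max m' n'" using arg_cong[OF assms, of length] by simp
  have "m = m'"
  proof (rule ccontr)
    assume "m \<noteq> m'"
    then consider "m < m'" | "m' < m" by linarith
    then show False
    proof cases
      case 1
      then have "m < max m n" using L by simp
      then show False using arg_cong[OF assms, of "\<lambda>w. w ! m"] conv_nth[of m m n] conv_nth[of m m' n'] L 1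
        by simp
    next
      case 2
      then have "m' < max m n" using L by simp
      then show False using arg_cong[OF assms, of "\<lambda>w. w ! m'"] conv_nth[of m' m n] conv_nth[of m' m' n'] L 2
        by simp
    qed
  qed
  moreover have "n = n'"
  proof (rule ccontr)
    assume "n \<noteq> n'"
    then consider "n < n'" | "n' < n" by linarith
    then show False
    proof cases
      case 1
      then have "n < max m n" using L by simp
      then show False using arg_cong[OF assms, of "\<lambda>w. w ! n"] conv_nth[of n m n] conv_nth[of n m' n'] L 1
        by simp
    next
      case 2
      then have "n' < max m n" using L by simp
      then show False using arg_cong[OF assms, of "\<lambda>w. w ! n'"] conv_nth[of n' m n] conv_nth[of n' m' n'] L 2
        by simp
    qed
  qed
  ultimately show ?thesis by simp
qed

lemma conv_snoc_eq: "conv (Suc m) (Suc m) = conv m m @ [(True, True)]"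
  by (simp add: conv_def)

lemma conv_snoc_fst: "n \<le> m \<Longrightarrow> conv (Suc m) n = conv m n @ [(True, False)]"
  by (simp add: conv_def max_def)

lemma conv_snoc_snd: "m \<le> n \<Longrightarrow> conv m (Suc n) = conv m n @ [(False, True)]"
  by (simp add: conv_def max_def)

lemma funpow_closed: "x \<in> S \<Longrightarrow> \<forall>y\<in>S. g y \<in> S \<Longrightarrow> (g ^^ k) x \<in> S"
  by (induction k) auto

lemma eventually_periodic:
  assumes "finite S" "x0 \<in> S" "\<forall>y\<in>S. g y \<in> S"
  shows "\<exists>t p. 0 < p \<and> (\<forall>x y. kap t p x = kap t p y \<longrightarrow> (g ^^ x) x0 = (g ^^ y) x0)"
proof -
  let ?h = "\<lambda>m. (g ^^ m) x0"
  have "?h ` {..card S} \<subseteq> S" using funpow_closed[OF assms(2,3)] by auto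
  then have "card (?h ` {..card S}) \<le> card S" using assms(1) by (simp add: card_mono)
  then have "\<not> inj_on ?h {..card S}" using pigeonhole[of ?h "{..card S}"] by simp
  then obtain i j where ij: "i \<le> card S" "j \<le> card S" "i \<noteq> j" "?h i = ?h j"
    unfolding inj_on_def by auto
  obtain a b where ab: "a < b" "?h a = ?h b"
    using ij by (metis linorder_neqE_nat)
  define p where "p = b - a"
  have p: "0 < p" using ab by (simp add: p_def)
  have per1: "?h (m + p) = ?h m" if "a \<le> m" for m
  proof -
    have e1: "m + p = (m - a) + b" using that ab by (simp add: p_def)
    have e2: "m = (m - a) + a" using that by simp
    have "?h (m + p) = (g ^^ (m - a)) (?h b)"
      unfolding e1 by (simp add: funpow_add)
    also have "\<dots> = (g ^^ (m - a)) (?h a)" using ab by simp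
    also have "\<dots> = (g ^^ ((m - a) + a)) x0" by (simp add: funpow_add)
    also have "\<dots> = ?h m" using e2 by simp
    finally show ?thesis .
  qed
  have perk: "?h (m + k * p) = ?h m" if "a \<le> m" for m k
  proof (induction k)
    case 0 then show ?case by simp
  next
    case (Suc k)
    have "?h (m + Suc k * p) = ?h ((m + k * p) + p)" by (simp add: algebra_simps)
    also have "\<dots> = ?h (m + k * p)" using per1 that by simp
    finally show ?case using Suc by simp
  qed
  have "\<forall>x y. kap a p x = kap a p y \<longrightarrow> ?h x = ?h y"
  proof (intro allI impI)
    fix x y assume "kap a p x = kap a p y"
    then have c: "x = y \<or> (a \<le> x \<and> a \<le> y \<and> x mod p = y mod p)" using kap_eq_iff[OF p] by blast
    show "?h x = ?h y"
    proof (cases "x = y")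
      case True then show ?thesis by simp
    next
      case False
      then have c: "a \<le> x" "a \<le> y" "x mod p = y mod p" using c by auto
      show ?thesis
      proof (cases "x \<le> y")
        case True
        then have "p dvd y - x" using c(3) mod_eq_dvd_iff_nat[OF True, of p] by simp
        then obtain k where "y - x = p * k" by (auto elim: dvdE)
        then have "y = x + k * p" using True by (simp add: algebra_simps)
        then show ?thesis using perk c by simp
      next
        case False
        then have "p dvd x - y" using c(3) mod_eq_dvd_iff_nat[of y x p] by simp
        then obtain k where "x - y = p * k" by (auto elim: dvdE)
        then have "x = y + k * p" using False by (simp add: algebra_simps)
        then show ?thesis using perk c by simp
      qed
    qed
  qed
  then show ?thesis using p by blast
qed

lemma combine_family:
  assumes "finite S"
    and "\<forall>q\<in>S. \<exists>t p. 0 < p \<and> Pr q (t::nat) (p::nat)"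
    and mono: "\<And>q t p t' p'. Pr q t p \<Longrightarrow> 0 < p \<Longrightarrow> 0 < p' \<Longrightarrow> t \<le> t' \<Longrightarrow> p dvd p' \<Longrightarrow> Pr q t' p'"
  shows "\<exists>t p. 0 < p \<and> (\<forall>q\<in>S. Pr q t p)"
  using assms(1,2)
proof (induction S rule: finite_induct)
  case empty show ?case by (rule exI[of _ "0::nat"], rule exI[of _ "1::nat"], simp)
next
  case (insert x F)
  then obtain t p where tp: "0 < p" "\<forall>q\<in>F. Pr q t p" by auto
  obtain t1 p1 where tp1: "0 < p1" "Pr x t1 p1" using insert.prems by auto
  have a: "Pr x (t + t1) (p * p1)"
    by (rule mono[OF tp1(2) tp1(1)]) (use tp tp1 in auto)
  have b: "Pr q (t + t1) (p * p1)" if "q \<in> F" for q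
    by (rule mono[of q t p]) (use tp tp1 that in auto)
  have "\<forall>q\<in>insert x F. Pr q (t + t1) (p * p1)" using a b by blast
  then show ?case using tp tp1 by (intro exI[of _ "t + t1"] exI[of _ "p * p1"]) simp
qed

definition cinv :: "nat \<Rightarrow> nat \<Rightarrow> (nat \<Rightarrow> nat \<Rightarrow> bool) \<Rightarrow> bool" where
  "cinv T P Sr \<longleftrightarrow> (\<forall>m n m' n'. kap T P (min m n) = kap T P (min m' n') \<and>
      kap T P (m - n) = kap T P (m' - n') \<and> kap T P (n - m) = kap T P (n' - m') \<longrightarrow> Sr m n = Sr m' n')"

lemma cinv_mono:
  assumes "cinv T P Sr" "0 < P" "0 < P'" "T \<le> T'" "P dvd P'"
  shows "cinv T' P' Sr"
  unfolding cinv_def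
proof (intro allI impI)
  fix m n m' n'
  assume k: "kap T' P' (min m n) = kap T' P' (min m' n') \<and> kap T' P' (m - n) = kap T' P' (m' - n') \<and>
      kap T' P' (n - m) = kap T' P' (n' - m')"
  have "kap T P (min m n) = kap T P (min m' n') \<and> kap T P (m - n) = kap T P (m' - n') \<and>
      kap T P (n - m) = kap T P (n' - m')" using kap_mono[OF assms(2,3,4,5)] k by blast
  then show "Sr m n = Sr m' n'" using assms(1) unfolding cinv_def by blast
qed

lemma periodic_mono:
  assumes "\<forall>x y. kap t p x = kap t p y \<longrightarrow> h x = h y" "0 < p" "0 < p'" "t \<le> t'" "p dvd p'"
  shows "\<forall>x y. kap t' p' x = kap t' p' y \<longrightarrow> h x = h y"
proof (intro allI impI)
  fix x y assume "kap t' p' x = kap t' p' y"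
  then have "kap t p x = kap t p y" using kap_mono[OF assms(2,3,4,5)] by blast
  then show "h x = h y" using assms(1) by blast
qed

lemma dfa_cinv:
  assumes "regular_lang {conv u v | u v. Sr u v}"
  shows "\<exists>T P. 0 < P \<and> cinv T P Sr"
proof -
  obtain S :: "nat set" and \<delta> :: "nat \<Rightarrow> bool \<times> bool \<Rightarrow> nat" and q0 F where
    A: "finite S" "q0 \<in> S" "\<forall>q\<in>S. \<forall>c. \<delta> q c \<in> S" "F \<subseteq> S"
       "{conv u v | u v. Sr u v} = {w. foldl \<delta> q0 w \<in> F}"
    using assms unfolding regular_lang_def by (elim exE conjE) (rule that; assumption)
  define gA where "gA = (\<lambda>q. \<delta> q (True, True))"
  define gB where "gB = (\<lambda>q. \<delta> q (True, False))"
  define gC where "gC = (\<lambda>q. \<delta> q (False, True))"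
  have SrF: "Sr m n \<longleftrightarrow> (gC ^^ (n - m)) ((gB ^^ (m - n)) ((gA ^^ (min m n)) q0)) \<in> F" for m n
  proof -
    have "Sr m n \<longleftrightarrow> conv m n \<in> {conv u v | u v. Sr u v}"
      using conv_inj by blast
    also have "\<dots> \<longleftrightarrow> foldl \<delta> q0 (conv m n) \<in> F" using A(5) by simp
    also have "foldl \<delta> q0 (conv m n) = (gC ^^ (n - m)) ((gB ^^ (m - n)) ((gA ^^ (min m n)) q0))"
      by (simp add: conv_decomp foldl_replicate gA_def gB_def gC_def)
    finally show ?thesis .
  qed
  have clA: "\<forall>y\<in>S. gA y \<in> S" "\<forall>y\<in>S. gB y \<in> S" "\<forall>y\<in>S. gC y \<in> S"
    using A(3) by (auto simp: gA_def gB_def gC_def)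
  obtain tA pA where pA: "0 < pA" "\<forall>x y. kap tA pA x = kap tA pA y \<longrightarrow> (gA ^^ x) q0 = (gA ^^ y) q0"
    using eventually_periodic[OF A(1,2) clA(1)] by blast
  have exB: "\<forall>q\<in>S. \<exists>t p. 0 < p \<and> (\<forall>x y. kap t p x = kap t p y \<longrightarrow> (gB ^^ x) q = (gB ^^ y) q)"
    using eventually_periodic[OF A(1) _ clA(2)] by blast
  obtain tB pB where pB: "0 < pB" "\<forall>q\<in>S. \<forall>x y. kap tB pB x = kap tB pB y \<longrightarrow> (gB ^^ x) q = (gB ^^ y) q"
  proof -
    have "\<exists>t p. 0 < p \<and> (\<forall>q\<in>S. \<forall>x y. kap t p x = kap t p y \<longrightarrow> (gB ^^ x) q = (gB ^^ y) q)"
      by (rule combine_family[OF A(1) exB]) (rule periodic_mono; assumption)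
    then show ?thesis using that by blast
  qed
  have exC: "\<forall>q\<in>S. \<exists>t p. 0 < p \<and> (\<forall>x y. kap t p x = kap t p y \<longrightarrow> (gC ^^ x) q = (gC ^^ y) q)"
    using eventually_periodic[OF A(1) _ clA(3)] by blast
  obtain tC pC where pC: "0 < pC" "\<forall>q\<in>S. \<forall>x y. kap tC pC x = kap tC pC y \<longrightarrow> (gC ^^ x) q = (gC ^^ y) q"
  proof -
    have "\<exists>t p. 0 < p \<and> (\<forall>q\<in>S. \<forall>x y. kap t p x = kap t p y \<longrightarrow> (gC ^^ x) q = (gC ^^ y) q)"
      by (rule combine_family[OF A(1) exC]) (rule periodic_mono; assumption)
    then show ?thesis using that by blast
  qed
  define T where "T = tA + tB + tC"
  define P where "P = pA * pB * pC"
  have P: "0 < P" using pA pB pC by (simp add: P_def)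
  have hA: "kap T P x = kap T P y \<Longrightarrow> (gA ^^ x) q0 = (gA ^^ y) q0" for x y
  proof -
    assume h: "kap T P x = kap T P y"
    have "tA \<le> T" "pA dvd P" by (auto simp: T_def P_def)
    then have "kap tA pA x = kap tA pA y" using kap_mono[OF pA(1) P _ _ h] by blast
    then show ?thesis using pA(2)  by blast
  qed
  have hB: "kap T P x = kap T P y \<Longrightarrow> (gB ^^ x) q = (gB ^^ y) q" if "q \<in> S" for q x y
  proof -
    assume h: "kap T P x = kap T P y"
    have "tB \<le> T" "pB dvd P" by (auto simp: T_def P_def)
    then have "kap tB pB x = kap tB pB y" using kap_mono[OF pB(1) P _ _ h] by blast
    then show ?thesis using pB(2) \<open>q \<in> S\<close> by blast
  qed
  have hC: "kap T P x = kap T P y \<Longrightarrow> (gC ^^ x) q = (gC ^^ y) q" if "q \<in> S" for q x y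
  proof -
    assume h: "kap T P x = kap T P y"
    have "tC \<le> T" "pC dvd P" by (auto simp: T_def P_def)
    then have "kap tC pC x = kap tC pC y" using kap_mono[OF pC(1) P _ _ h] by blast
    then show ?thesis using pC(2) \<open>q \<in> S\<close> by blast
  qed
  have "cinv T P Sr"
    unfolding cinv_def
  proof (intro allI impI)
    fix m n m' n'
    assume k: "kap T P (min m n) = kap T P (min m' n') \<and> kap T P (m - n) = kap T P (m' - n') \<and>
      kap T P (n - m) = kap T P (n' - m')"
    have s1: "(gA ^^ (min m n)) q0 = (gA ^^ (min m' n')) q0" using hA k by blast
    have inS1: "(gA ^^ (min m n)) q0 \<in> S" using funpow_closed[OF A(2) clA(1)] by blast
    have s2: "(gB ^^ (m - n)) ((gA ^^ (min m n)) q0) = (gB ^^ (m' - n')) ((gA ^^ (min m' n')) q0)"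
    proof -
      have "(gB ^^ (m - n)) ((gA ^^ (min m n)) q0) = (gB ^^ (m' - n')) ((gA ^^ (min m n)) q0)"
        by (rule hB[OF inS1]) (use k in blast)
      then show ?thesis using s1 by simp
    qed
    have inS2: "(gB ^^ (m - n)) ((gA ^^ (min m n)) q0) \<in> S" using funpow_closed[OF inS1 clA(2)] by blast
    have "(gC ^^ (n - m)) ((gB ^^ (m - n)) ((gA ^^ (min m n)) q0)) =
          (gC ^^ (n' - m')) ((gB ^^ (m' - n')) ((gA ^^ (min m' n')) q0))"
    proof -
      have "(gC ^^ (n - m)) ((gB ^^ (m - n)) ((gA ^^ (min m n)) q0)) = (gC ^^ (n' - m')) ((gB ^^ (m - n)) ((gA ^^ (min m n)) q0))"
        by (rule hC[OF inS2]) (use k in blast)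
      then show ?thesis using s2 by simp
    qed
    then show "Sr m n = Sr m' n'" using SrF by simp
  qed
  then show ?thesis using P by blast
qed

lemma dfa_unary:
  assumes "regular_lang (unary_word ` L)"
  shows "\<exists>T P. 0 < P \<and> (\<forall>x y. kap T P x = kap T P y \<longrightarrow> (x \<in> L \<longleftrightarrow> y \<in> L))"
proof -
  obtain S :: "nat set" and \<delta> :: "nat \<Rightarrow> unit \<Rightarrow> nat" and q0 F where
    A: "finite S" "q0 \<in> S" "\<forall>q\<in>S. \<forall>c. \<delta> q c \<in> S" "F \<subseteq> S"
       "unary_word ` L = {w. foldl \<delta> q0 w \<in> F}"
    using assms unfolding regular_lang_def by (elim exE conjE) (rule that; assumption)
  define g where "g = (\<lambda>q. \<delta> q ())"
  have LF: "x \<in> L \<longleftrightarrow> (g ^^ x) q0 \<in> F" for x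
  proof -
    have "inj unary_word" by (rule injI) (metis length_replicate unary_word_def)
    then have "x \<in> L \<longleftrightarrow> unary_word x \<in> unary_word ` L"
      by (simp add: inj_image_mem_iff)
    also have "\<dots> \<longleftrightarrow> (g ^^ x) q0 \<in> F" using A(5) by (simp add: unary_word_def foldl_replicate g_def)
    finally show ?thesis .
  qed
  have cl: "\<forall>y\<in>S. g y \<in> S" using A(3) by (simp add: g_def)
  obtain t p where tp: "0 < p" "\<forall>x y. kap t p x = kap t p y \<longrightarrow> (g ^^ x) q0 = (g ^^ y) q0"
    using eventually_periodic[OF A(1,2) cl] by blast
  have "\<forall>x y. kap t p x = kap t p y \<longrightarrow> (x \<in> L \<longleftrightarrow> y \<in> L)"
  proof (intro allI impI)
    fix x y assume "kap t p x = kap t p y"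
    then have "(g ^^ x) q0 = (g ^^ y) q0" using tp(2) by blast
    then show "x \<in> L \<longleftrightarrow> y \<in> L" using LF[of x] LF[of y] by simp
  qed
  then have "0 < p \<and> (\<forall>x y. kap t p x = kap t p y \<longrightarrow> (x \<in> L \<longleftrightarrow> y \<in> L))"
    using tp(1) by blast
  then show ?thesis by blast
qed

definition enc :: "nat \<Rightarrow> nat \<Rightarrow> nat \<Rightarrow> nat \<Rightarrow> nat \<times> nat \<times> nat" where
  "enc T P m n = (if m = n then 0 else if n < m then 1 else 2, kap T P (min m n), kap T P (m - n + (n - m)))"

definition dlt :: "nat \<Rightarrow> nat \<Rightarrow> nat \<times> nat \<times> nat \<Rightarrow> bool \<times> bool \<Rightarrow> nat \<times> nat \<times> nat" where
  "dlt T P s c = (case s of (ph, a, b) \<Rightarrow> case c of (x, y) \<Rightarrow>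
     if ph = 0 \<and> x \<and> y then (0, stp T P a, b)
     else if (ph = 0 \<or> ph = 1) \<and> x \<and> \<not> y then (1, a, stp T P b)
     else if (ph = 0 \<or> ph = 2) \<and> \<not> x \<and> y then (2, a, stp T P b)
     else (3, 0, 0))"

definition inv2 :: "nat \<Rightarrow> nat \<Rightarrow> (nat \<Rightarrow> nat \<Rightarrow> bool) \<Rightarrow> bool" where
  "inv2 T P Sr \<longleftrightarrow> (\<forall>u v u' v'.
     (u \<le> v \<and> u' \<le> v' \<and> kap T P u = kap T P u' \<and> kap T P (v - u) = kap T P (v' - u') \<longrightarrow> Sr u v = Sr u' v') \<and>
     (v \<le> u \<and> v' \<le> u' \<and> kap T P v = kap T P v' \<and> kap T P (u - v) = kap T P (u' - v') \<longrightarrow> Sr u v = Sr u' v'))"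

lemma kap_1: "0 < P \<Longrightarrow> kap T P (Suc 0) = stp T P 0"
  using kap_Suc[of P T 0] by simp

lemma kap_eq0: "kap T P x = 0 \<Longrightarrow> 0 < T \<Longrightarrow> x = 0"
  by (auto simp: kap_def split: if_splits)

lemma enc_inv:
  assumes "0 < P" "inv2 T P Sr" "enc T P m n = enc T P m' n'"
  shows "Sr m n = Sr m' n'"
proof -
  have e: "(if m = n then 0 else if n < m then 1 else 2::nat) = (if m' = n' then 0 else if n' < m' then 1 else 2)"
      "kap T P (min m n) = kap T P (min m' n')" "kap T P (m - n + (n - m)) = kap T P (m' - n' + (n' - m'))"
    using assms(3) by (simp_all add: enc_def)
  consider "m \<le> n" "m' \<le> n'" | "n \<le> m" "n' \<le> m'"
    using e(1) by (auto split: if_splits)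
  then show ?thesis
  proof cases
    case 1
    have H: "\<And>u v u' v'. u \<le> v \<Longrightarrow> u' \<le> v' \<Longrightarrow> kap T P u = kap T P u' \<Longrightarrow>
       kap T P (v - u) = kap T P (v' - u') \<Longrightarrow> Sr u v = Sr u' v'"
      using assms(2) unfolding inv2_def by blast
    have "min m n = m" "min m' n' = m'" "m - n + (n - m) = n - m" "m' - n' + (n' - m') = n' - m'"
      using 1 by auto
    then show ?thesis using H[OF 1(1) 1(2)] e(2,3) by simp
  next
    case 2
    have H: "\<And>u v u' v'. v \<le> u \<Longrightarrow> v' \<le> u' \<Longrightarrow> kap T P v = kap T P v' \<Longrightarrow>
       kap T P (u - v) = kap T P (u' - v') \<Longrightarrow> Sr u v = Sr u' v'"
      using assms(2) unfolding inv2_def by blast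
    have "min m n = n" "min m' n' = n'" "m - n + (n - m) = m - n" "m' - n' + (n' - m') = m' - n'"
      using 2 by auto
    then show ?thesis using H[OF 2(1) 2(2)] e(2,3) by simp
  qed
qed

lemma fold_conv_eq:
  assumes "0 < P"
  shows "foldl (dlt T P) (0, 0, 0) (conv m m) = enc T P m m"
proof (induction m)
  case 0 then show ?case by (simp add: conv_def enc_def)
next
  case (Suc m)
  then show ?case using assms by (simp add: conv_snoc_eq dlt_def enc_def kap_Suc)
qed

lemma fold_conv_le:
  assumes "0 < P"
  shows "foldl (dlt T P) (0, 0, 0) (conv m (m + d)) = enc T P m (m + d)"
proof (induction d)
  case 0 then show ?case using fold_conv_eq[OF assms] by simp
next
  case (Suc d)
  have c: "conv m (Suc (m + d)) = conv m (m + d) @ [(False, True)]"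
    using conv_snoc_snd[of m "m + d"] by simp
  have "foldl (dlt T P) (0, 0, 0) (conv m (Suc (m + d))) = dlt T P (enc T P m (m + d)) (False, True)"
    unfolding c using Suc by simp
  also have "\<dots> = enc T P m (Suc (m + d))" using assms by (simp add: dlt_def enc_def kap_Suc kap_1)
  finally show ?case by simp
qed

lemma fold_conv_ge:
  assumes "0 < P"
  shows "foldl (dlt T P) (0, 0, 0) (conv (n + d) n) = enc T P (n + d) n"
proof (induction d)
  case 0 then show ?case using fold_conv_eq[OF assms] by simp
next
  case (Suc d)
  have c: "conv (Suc (n + d)) n = conv (n + d) n @ [(True, False)]"
    using conv_snoc_fst[of n "n + d"] by simp
  have "foldl (dlt T P) (0, 0, 0) (conv (Suc (n + d)) n) = dlt T P (enc T P (n + d) n) (True, False)"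
    unfolding c using Suc by simp
  also have "\<dots> = enc T P (Suc (n + d)) n" using assms by (simp add: dlt_def enc_def kap_Suc kap_1)
  finally show ?case by simp
qed

lemma fold_conv:
  assumes "0 < P"
  shows "foldl (dlt T P) (0, 0, 0) (conv m n) = enc T P m n"
proof (cases "m \<le> n")
  case True
  then obtain d where "n = m + d" using le_Suc_ex by blast
  then show ?thesis using fold_conv_le[OF assms] by simp
next
  case False
  then obtain d where "m = n + d" using le_Suc_ex[of n m] by auto
  then show ?thesis using fold_conv_ge[OF assms] by simp
qed

lemma reach:
  assumes "0 < P"
  shows "foldl (dlt T P) (0, 0, 0) w = (3, 0, 0) \<or> (\<exists>m n. w = conv m n \<and> foldl (dlt T P) (0, 0, 0) w = enc T P m n)"
proof (induction w rule: rev_induct)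
  case Nil
  then show ?case by (intro disjI2 exI[of _ 0]) (simp add: conv_def enc_def)
next
  case (snoc c w)
  show ?case
  proof (cases "foldl (dlt T P) (0, 0, 0) w = (3, 0, 0)")
    case True
    have d: "dlt T P (3, 0, 0) c = (3, 0, 0)" by (cases c) (simp add: dlt_def)
    show ?thesis using True d by simp
  next
    case False
    then obtain m n where mn: "w = conv m n" "foldl (dlt T P) (0, 0, 0) w = enc T P m n"
      using snoc by blast
    obtain x y where c: "c = (x, y)" by (cases c)
    have st: "foldl (dlt T P) (0, 0, 0) (w @ [c]) = dlt T P (enc T P m n) (x, y)"
      using mn c by simp
    consider "m = n" | "n < m" | "m < n" by linarith
    then show ?thesis
    proof cases
      case 1
      consider "x" "y" | "x" "\<not> y" | "\<not> x" "y" | "\<not> x" "\<not> y" by blast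
      then show ?thesis
      proof cases
        case 1
        then have "w @ [c] = conv (Suc m) (Suc n)" using mn c \<open>m = n\<close> conv_snoc_eq by simp
        moreover have "dlt T P (enc T P m n) (x, y) = enc T P (Suc m) (Suc n)"
          using 1 \<open>m = n\<close> assms by (simp add: dlt_def enc_def kap_Suc)
        ultimately show ?thesis using st by (intro disjI2 exI[of _ "(Suc m)"] exI[of _ "(Suc n)"]) simp
      next
        case 2
        then have "w @ [c] = conv (Suc m) n" using mn c \<open>m = n\<close> conv_snoc_fst by simp
        moreover have "dlt T P (enc T P m n) (x, y) = enc T P (Suc m) n"
          using 2 \<open>m = n\<close> assms by (simp add: dlt_def enc_def kap_Suc kap_1)
        ultimately show ?thesis using st by (intro disjI2 exI[of _ "(Suc m)"] exI[of _ "n"]) simp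
      next
        case 3
        then have "w @ [c] = conv m (Suc n)" using mn c \<open>m = n\<close> conv_snoc_snd by simp
        moreover have "dlt T P (enc T P m n) (x, y) = enc T P m (Suc n)"
          using 3 \<open>m = n\<close> assms by (simp add: dlt_def enc_def kap_Suc kap_1)
        ultimately show ?thesis using st by (intro disjI2 exI[of _ "m"] exI[of _ "(Suc n)"]) simp
      next
        case 4
        then have "dlt T P (enc T P m n) (x, y) = (3, 0, 0)" using \<open>m = n\<close> by (simp add: dlt_def enc_def)
        then show ?thesis using st by simp
      qed
    next
      case 2
      show ?thesis
      proof (cases "x \<and> \<not> y")
        case True
        then have "w @ [c] = conv (Suc m) n" using mn c 2 conv_snoc_fst by simp
        moreover have "dlt T P (enc T P m n) (x, y) = enc T P (Suc m) n"
          using True 2 assms by (simp add: dlt_def enc_def kap_Suc Suc_diff_le)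
        ultimately show ?thesis using st by (intro disjI2 exI[of _ "(Suc m)"] exI[of _ "n"]) simp
      next
        case False
        then have "dlt T P (enc T P m n) (x, y) = (3, 0, 0)" using 2 by (auto simp: dlt_def enc_def)
        then show ?thesis using st by simp
      qed
    next
      case 3
      show ?thesis
      proof (cases "\<not> x \<and> y")
        case True
        then have "w @ [c] = conv m (Suc n)" using mn c 3 conv_snoc_snd by simp
        moreover have "dlt T P (enc T P m n) (x, y) = enc T P m (Suc n)"
          using True 3 assms by (simp add: dlt_def enc_def kap_Suc Suc_diff_le)
        ultimately show ?thesis using st by (intro disjI2 exI[of _ "m"] exI[of _ "(Suc n)"]) simp
      next
        case False
        then have "dlt T P (enc T P m n) (x, y) = (3, 0, 0)" using 3 by (auto simp: dlt_def enc_def)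
        then show ?thesis using st by simp
      qed
    qed
  qed
qed

lemma reg_conv:
  assumes "0 < P" "inv2 T P Sr"
  shows "regular_lang {conv u v | u v. Sr u v}"
proof (rule regI)
  let ?S = "{..3::nat} \<times> {..<T+P} \<times> {..<T+P}"
  show "finite ?S" by simp
  show "(0, 0, 0) \<in> ?S" using assms by simp
  have stp: "b < T + P \<Longrightarrow> stp T P b < T + P" for b using assms by (simp add: stp_def)
  show "\<forall>q\<in>?S. \<forall>c. dlt T P q c \<in> ?S" using stp assms by (auto simp: dlt_def split: prod.splits)
  let ?F = "{st. st \<noteq> (3, 0, 0) \<and> (\<exists>m n. st = enc T P m n \<and> Sr m n)}"
  show "?F \<subseteq> ?S"
  proof
    fix st assume "st \<in> ?F"
    then obtain m n where "st = enc T P m n" by blast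
    then show "st \<in> ?S" by (simp add: enc_def kap_lt[OF assms(1)])
  qed
  show "{conv u v | u v. Sr u v} = {w. foldl (dlt T P) (0, 0, 0) w \<in> ?F}"
  proof (intro set_eqI iffI)
    fix w assume "w \<in> {conv u v | u v. Sr u v}"
    then obtain u v where "w = conv u v" "Sr u v" by blast
    then show "w \<in> {w. foldl (dlt T P) (0, 0, 0) w \<in> ?F}"
      using fold_conv[OF assms(1)] by (auto simp: enc_def)
  next
    fix w assume "w \<in> {w. foldl (dlt T P) (0, 0, 0) w \<in> ?F}"
    then obtain m n where a: "foldl (dlt T P) (0, 0, 0) w \<noteq> (3, 0, 0)"
      "foldl (dlt T P) (0, 0, 0) w = enc T P m n" "Sr m n" by blast
    then obtain m' n' where b: "w = conv m' n'" "foldl (dlt T P) (0, 0, 0) w = enc T P m' n'"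
      using reach[OF assms(1)] by blast
    have "Sr m' n'" using enc_inv[OF assms(1,2), of m' n' m n] a b by simp
    then show "w \<in> {conv u v | u v. Sr u v}" using b by blast
  qed
qed

lemma stp_pow: "0 < P \<Longrightarrow> (stp T P ^^ k) 0 = kap T P k"
  by (induction k) (simp_all add: kap_Suc)

lemma reg_unary:
  assumes "0 < P" "\<forall>x y. kap T P x = kap T P y \<longrightarrow> (x \<in> L \<longleftrightarrow> y \<in> L)"
  shows "regular_lang (unary_word ` L)"
proof (rule regI)
  let ?S = "{..<T+P}"
  show "finite ?S" by simp
  show "0 \<in> ?S" using assms by simp
  show "\<forall>q\<in>?S. \<forall>c. (\<lambda>q (c::unit). stp T P q) q c \<in> ?S" using assms by (simp add: stp_def)
  show "kap T P ` L \<subseteq> ?S" using kap_lt[OF assms(1)] by auto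
  have fw: "foldl (\<lambda>q (c::unit). stp T P q) 0 w = kap T P (length w)" for w
  proof -
    have "w = replicate (length w) ()" by (simp add: replicate_length_same)
    then have "foldl (\<lambda>q (c::unit). stp T P q) 0 w = foldl (\<lambda>q (c::unit). stp T P q) 0 (replicate (length w) ())"
      by simp
    also have "\<dots> = kap T P (length w)" by (simp add: foldl_replicate stp_pow[OF assms(1)])
    finally show ?thesis .
  qed
  show "unary_word ` L = {w. foldl (\<lambda>q (c::unit). stp T P q) 0 w \<in> kap T P ` L}"
  proof (intro set_eqI iffI)
    fix w assume "w \<in> unary_word ` L"
    then show "w \<in> {w. foldl (\<lambda>q (c::unit). stp T P q) 0 w \<in> kap T P ` L}"
      by (auto simp: fw unary_word_def)
  next
    fix w assume "w \<in> {w. foldl (\<lambda>q (c::unit). stp T P q) 0 w \<in> kap T P ` L}"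
    then obtain x where "x \<in> L" "kap T P (length w) = kap T P x" by (auto simp: fw)
    then have "length w \<in> L" using assms(2) by blast
    moreover have "w = unary_word (length w)" by (simp add: unary_word_def replicate_length_same)
    ultimately show "w \<in> unary_word ` L" by blast
  qed
qed

lemma cinv_le:
  assumes "cinv T P S" "u \<le> v" "u' \<le> v'" "kap T P u = kap T P u'" "kap T P (v - u) = kap T P (v' - u')"
  shows "S u v = S u' v'"
proof -
  have "min u v = u" "min u' v' = u'" "u - v = 0" "u' - v' = 0" using assms(2,3) by auto
  then show ?thesis using assms(1,4,5) unfolding cinv_def by metis
qed

lemma cinv_ge:
  assumes "cinv T P S" "v \<le> u" "v' \<le> u'" "kap T P v = kap T P v'" "kap T P (u - v) = kap T P (u' - v')"
  shows "S u v = S u' v'"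
proof -
  have "min u v = v" "min u' v' = v'" "v - u = 0" "v' - u' = 0" using assms(2,3) by auto
  then show ?thesis using assms(1,4,5) unfolding cinv_def by metis
qed

lemma cinv_swap: "cinv T P S \<Longrightarrow> cinv T P (\<lambda>u v. S v u)"
  unfolding cinv_def by (metis min.commute)

lemma block_eq:
  assumes "cinv T P S" "0 < P" "T \<le> N" "r < P" "s < P"
  shows "S (N + r + P * a) (N + s + P * a) = S (N + r) (N + s)"
proof (cases "r \<le> s")
  case True
  show ?thesis
  proof (rule cinv_le[OF assms(1)])
    show "N + r + P * a \<le> N + s + P * a" "N + r \<le> N + s" using True by auto
    show "kap T P (N + r + P * a) = kap T P (N + r)" using assms by (intro kap_eqI) auto
    show "kap T P (N + s + P * a - (N + r + P * a)) = kap T P (N + s - (N + r))" by simp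
  qed
next
  case False
  show ?thesis
  proof (rule cinv_ge[OF assms(1)])
    show "N + s + P * a \<le> N + r + P * a" "N + s \<le> N + r" using False by auto
    show "kap T P (N + s + P * a) = kap T P (N + s)" using assms by (intro kap_eqI) auto
    show "kap T P (N + r + P * a - (N + s + P * a)) = kap T P (N + r - (N + s))" by simp
  qed
qed

lemma block_next:
  assumes "cinv T P S" "0 < P" "T \<le> N" "r < P" "s < P"
  shows "S (N + r + P * a) (N + s + P * (a + 1)) = S (N + r) (N + s + P)"
proof (rule cinv_le[OF assms(1)])
  show "N + r + P * a \<le> N + s + P * (a + 1)" "N + r \<le> N + s + P" using assms by auto
  show "kap T P (N + r + P * a) = kap T P (N + r)" using assms by (intro kap_eqI) auto
  have "N + s + P * (a + 1) - (N + r + P * a) = N + s + P - (N + r)" using assms by (simp add: algebra_simps)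
  then show "kap T P (N + s + P * (a + 1) - (N + r + P * a)) = kap T P (N + s + P - (N + r))" by simp
qed

lemma block_far:
  assumes "cinv T P S" "0 < P" "T \<le> N" "T \<le> P" "r < P" "s < P" "a + 2 \<le> b"
  shows "S (N + r + P * a) (N + s + P * b) = S (N + r) (N + s + 2 * P)"
proof (rule cinv_le[OF assms(1)])
  obtain c where b: "b = a + 2 + c" using assms(7) le_Suc_ex by blast
  show "N + r + P * a \<le> N + s + P * b" "N + r \<le> N + s + 2 * P" using assms b by (auto simp: algebra_simps)
  show "kap T P (N + r + P * a) = kap T P (N + r)" using assms by (intro kap_eqI) auto
  have e1: "N + s + P * b - (N + r + P * a) = (s + 2 * P - r) + P * c" using assms b by (simp add: algebra_simps)
  have e2: "N + s + 2 * P - (N + r) = s + 2 * P - r" by simp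
  have m: "((s + 2 * P - r) + P * c) mod P = (s + 2 * P - r) mod P" by simp
  show "kap T P (N + s + P * b - (N + r + P * a)) = kap T P (N + s + 2 * P - (N + r))"
    unfolding e1 e2 by (rule kap_eqI[OF _ _ m]) (use assms in auto)
qed

lemma block_prev:
  assumes "cinv T P S" "0 < P" "T \<le> N" "r < P" "s < P"
  shows "S (N + r + P * (b + 1)) (N + s + P * b) = S (N + r + P) (N + s)"
  using block_next[OF cinv_swap[OF assms(1)] assms(2,3,5,4), of b] by simp

lemma block_far_back:
  assumes "cinv T P S" "0 < P" "T \<le> N" "T \<le> P" "r < P" "s < P" "b + 2 \<le> a"
  shows "S (N + r + P * a) (N + s + P * b) = S (N + r + 2 * P) (N + s)"
  using block_far[OF cinv_swap[OF assms(1)] assms(2,3,4,6,5,7)] by simp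

lemma block_q:
  assumes "cinv T P S" "0 < P" "T \<le> P" "q < N" "1 \<le> i"
  shows "S q (N + r + P * i) = S q (N + r + P)"
proof (rule cinv_le[OF assms(1)])
  obtain c where i: "i = 1 + c" using assms(5) le_Suc_ex by blast
  show "q \<le> N + r + P * i" "q \<le> N + r + P" using assms by auto
  show "kap T P q = kap T P q" by simp
  have e1: "N + r + P * i - q = (N + r + P - q) + P * c" using assms i by (simp add: algebra_simps)
  have m: "((N + r + P - q) + P * c) mod P = (N + r + P - q) mod P" by simp
  show "kap T P (N + r + P * i - q) = kap T P (N + r + P - q)"
    unfolding e1 by (rule kap_eqI[OF _ _ m]) (use assms in auto)
qed

lemma block_q_back:
  assumes "cinv T P S" "0 < P" "T \<le> P" "q < N" "1 \<le> i"
  shows "S (N + r + P * i) q = S (N + r + P) q"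
  using block_q[OF cinv_swap[OF assms(1)] assms(2-5)] by simp

lemma mod_diff_cong2:
  fixes a b c d P :: nat
  assumes "c \<le> a" "d \<le> b" "a mod P = b mod P" "c mod P = d mod P"
  shows "(a - c) mod P = (b - d) mod P"
proof -
  have "(a - c + c) mod P = (b - d + d) mod P" using assms by simp
  then have "((a - c) mod P + c mod P) mod P = ((b - d) mod P + d mod P) mod P"
    by (simp add: mod_add_eq)
  then have "((a - c) mod P + c mod P) mod P = ((b - d) mod P + c mod P) mod P" using assms(4) by simp
  then have "((a - c) + c) mod P = ((b - d) + c) mod P" by (simp add: mod_add_eq)
  then show ?thesis using mod_eq_shift[of "a - c" c P "b - d"] by simp
qed

lemma shift:
  assumes "0 < P" "2 * T + 2 * P \<le> u" "2 * T + 2 * P \<le> u'" "u mod P = u' mod P" "v < u"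
  shows "\<exists>v' < u'. kap T P v = kap T P v' \<and> kap T P (u - v) = kap T P (u' - v')"
proof -
  consider "v < T" | "u - v < T" | "T \<le> v" "T \<le> u - v" by linarith
  then show ?thesis
  proof cases
    case 1
    have "kap T P (u - v) = kap T P (u' - v)"
      using assms 1 by (intro kap_eqI) (auto intro: mod_diff_cong2)
    then show ?thesis using 1 assms by (intro exI[of _ v]) auto
  next
    case 2
    define v' where "v' = u' - (u - v)"
    have "u' - v' = u - v" using assms 2 by (simp add: v'_def)
    moreover have "kap T P v = kap T P v'"
    proof (rule kap_eqI)
      show "T \<le> v" "T \<le> v'" using assms 2 by (auto simp: v'_def)
      have "(u - (u - v)) mod P = (u' - (u - v)) mod P"
        by (rule mod_diff_cong2) (use assms 2 in auto)
      moreover have "u - (u - v) = v" using assms by simp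
      ultimately show "v mod P = v' mod P" by (simp add: v'_def)
    qed
    moreover have "v' < u'" using assms 2 by (simp add: v'_def)
    ultimately show ?thesis by auto
  next
    case 3
    define v' where "v' = T + (v - T) mod P"
    have v'lt: "v' < T + P" using assms by (simp add: v'_def)
    have kv: "kap T P v = kap T P v'" using 3 assms by (simp add: kap_def v'_def)
    have vm: "v' mod P = v mod P"
    proof -
      have "v' mod P = (T + (v - T)) mod P" by (simp add: v'_def mod_add_right_eq)
      then show ?thesis using 3 by simp
    qed
    have "kap T P (u - v) = kap T P (u' - v')"
      using assms 3 v'lt vm by (intro kap_eqI) (auto intro!: mod_diff_cong2)
    then show ?thesis using kv v'lt assms by (intro exI[of _ v']) auto
  qed
qed

lemma seed_in: "seed k i \<in> prop_carrier Q' n \<longleftrightarrow> k < n \<and> 1 \<le> i"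
  by (auto simp: prop_carrier_def)

lemma inl_in: "Inl q \<in> prop_carrier Q' n \<longleftrightarrow> q \<in> Q'"
  by (auto simp: prop_carrier_def)

definition agree :: "nat set \<Rightarrow> nat \<Rightarrow> (elt \<Rightarrow> elt \<Rightarrow> bool) \<Rightarrow> bool" where
  "agree Q' n \<rho> \<longleftrightarrow> (\<forall>a\<in>prop_carrier Q' n. \<forall>b\<in>prop_carrier Q' n. prop_rel \<rho> a b = \<rho> a b)"

lemma agree_seed:
  assumes "agree Q' n \<rho>" "k < n" "l < n" "1 \<le> i" "1 \<le> j"
  shows "\<rho> (seed k i) (seed l j) = (if j = i then \<rho> (seed k 1) (seed l 1)
      else if j = i + 1 then \<rho> (seed k 1) (seed l 2)
      else if j + 1 = i then \<rho> (seed k 2) (seed l 1)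
      else if i + 2 \<le> j then \<rho> (seed k 1) (seed l 3) else \<rho> (seed k 3) (seed l 1))"
proof -
  have m: "seed k i \<in> prop_carrier Q' n" "seed l j \<in> prop_carrier Q' n" using assms by (auto simp: seed_in)
  have e: "prop_rel \<rho> (seed k i) (seed l j) = \<rho> (seed k i) (seed l j)"
    using assms(1) m unfolding agree_def by blast
  show ?thesis by (simp only: e[symmetric] prop_rel.simps) auto
qed

lemma agree_qs:
  assumes "agree Q' n \<rho>" "q \<in> Q'" "k < n" "2 \<le> i"
  shows "\<rho> (Inl q) (seed k i) = \<rho> (Inl q) (seed k 2)" "\<rho> (seed k i) (Inl q) = \<rho> (seed k 2) (Inl q)"
proof -
  have m: "seed k i \<in> prop_carrier Q' n" "Inl q \<in> prop_carrier Q' n" using assms by (auto simp: seed_in inl_in)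
  have e: "prop_rel \<rho> (Inl q) (seed k i) = \<rho> (Inl q) (seed k i)"
    "prop_rel \<rho> (seed k i) (Inl q) = \<rho> (seed k i) (Inl q)"
    using assms(1) m unfolding agree_def by blast+
  show "\<rho> (Inl q) (seed k i) = \<rho> (Inl q) (seed k 2)" using assms(4)
    by (simp only: e(1)[symmetric] prop_rel.simps) auto
  show "\<rho> (seed k i) (Inl q) = \<rho> (seed k 2) (Inl q)" using assms(4)
    by (simp only: e(2)[symmetric] prop_rel.simps) auto
qed

lemma FA_from_agree:
  assumes "finite Q'" "agree Q' n \<rho>"
  shows "FA_foundational Q' n \<rho>"
proof -
  note AS = agree_seed[OF assms(2)]
  have c1: "\<rho> (seed k i) (seed l i) = \<rho> (seed k j) (seed l j)"
    if "k < n" "l < n" "i \<in> {1..5}" "j \<in> {1..5}" for k l i j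
    using AS[of k l i i] AS[of k l j j] that by simp
  have c2: "\<rho> (seed k i) (seed l (i+1)) = \<rho> (seed k j) (seed l (j+1))"
    if "k < n" "l < n" "i \<in> {1..4}" "j \<in> {1..4}" for k l i j
    using AS[of k l i "i+1"] AS[of k l j "j+1"] that by simp
  have c3: "\<rho> (seed k (i+1)) (seed l i) = \<rho> (seed k (j+1)) (seed l j)"
    if "k < n" "l < n" "i \<in> {1..4}" "j \<in> {1..4}" for k l i j
    using AS[of k l "i+1" i] AS[of k l "j+1" j] that by simp
  have c4: "\<rho> (seed k i) (seed l j) = \<rho> (seed k i') (seed l j')"
    if "k < n" "l < n" "i \<in> {1..5}" "j \<in> {1..5}" "i' \<in> {1..5}" "j' \<in> {1..5}"
       "i + 2 \<le> j" "i' + 2 \<le> j'" for k l i j i' j'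
    using AS[of k l i j] AS[of k l i' j'] that by simp
  have c5: "\<rho> (seed k j) (seed l i) = \<rho> (seed k j') (seed l i')"
    if "k < n" "l < n" "i \<in> {1..5}" "j \<in> {1..5}" "i' \<in> {1..5}" "j' \<in> {1..5}"
       "i + 2 \<le> j" "i' + 2 \<le> j'" for k l i j i' j'
    using AS[of k l j i] AS[of k l j' i'] that by simp
  have c6: "\<rho> (Inl q) (seed k i) = \<rho> (Inl q) (seed k j) \<and> \<rho> (seed k i) (Inl q) = \<rho> (seed k j) (Inl q)"
    if "k < n" "q \<in> Q'" "i \<in> {2..5}" "j \<in> {2..5}" for k q i j
    using agree_qs[OF assms(2) that(2,1), of i] agree_qs[OF assms(2) that(2,1), of j] that by simp
  show ?thesis unfolding FA_foundational_def
    apply (intro conjI allI impI ballI)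
    subgoal by (rule assms(1))
    subgoal by (rule c1) assumption+
    subgoal by (rule c2) assumption+
    subgoal by (rule c3) assumption+
    subgoal by (rule c4) assumption+
    subgoal by (rule c5) assumption+
    subgoal by (rule c6[THEN conjunct1]) assumption+
    subgoal by (rule c6[THEN conjunct2]) assumption+
    done
qed

lemma shape_from_agree:
  assumes "agree Q' n \<rho>" "k < n" "\<rho> (seed k 1) (seed k 1)"
    "\<rho> (seed k 1) (seed k 2) = \<rho> (seed k 1) (seed k 3)"
    "\<rho> (seed k 2) (seed k 1) = \<rho> (seed k 3) (seed k 1)"
  shows "seed_antichain \<rho> k \<or> seed_ascending \<rho> k \<or> seed_descending \<rho> k \<or> seed_scc \<rho> k"
proof -
  define B where "B = \<rho> (seed k 1) (seed k 2)"
  define C where "C = \<rho> (seed k 2) (seed k 1)"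
  have G: "\<rho> (seed k i) (seed k j) = (if i = j then True else if i < j then B else C)"
    if "1 \<le> i" "1 \<le> j" for i j
    using agree_seed[OF assms(1,2,2) that] assms(3,4,5) unfolding B_def C_def by auto
  consider "B" "C" | "B" "\<not> C" | "\<not> B" "C" | "\<not> B" "\<not> C" by blast
  then show ?thesis
  proof cases
    case 1
    then have "seed_scc \<rho> k" unfolding seed_scc_def using G by auto
    then show ?thesis by blast
  next
    case 2
    then have "seed_ascending \<rho> k" unfolding seed_ascending_def strictly_def using G by auto
    then show ?thesis by blast
  next
    case 3
    then have "seed_descending \<rho> k" unfolding seed_descending_def strictly_def using G by auto
    then show ?thesis by blast
  next
    case 4
    then have "seed_antichain \<rho> k" unfolding seed_antichain_def using G by auto
    then show ?thesis by blast
  qed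
qed

lemma lr:
  fixes X :: "'a set" and R :: "'a \<Rightarrow> 'a \<Rightarrow> bool"
  assumes qo: "quasi_order_on X R" and pres: "unary_FA_presentable X R"
  shows "\<exists>(Q'::nat set) (n::nat) (\<rho>::elt \<Rightarrow> elt \<Rightarrow> bool).
       FA_foundational_quasi_order Q' n \<rho> \<and>
       (\<forall>k<n. seed_antichain \<rho> k \<or> seed_ascending \<rho> k \<or>
              seed_descending \<rho> k \<or> seed_scc \<rho> k) \<and>
       isomorphic X R (prop_carrier Q' n) (prop_rel \<rho>)"
proof -
  obtain L :: "nat set" and \<phi> :: "nat \<Rightarrow> 'a" where regU: "regular_lang (unary_word ` L)" and img: "\<phi> ` L = X"
    and regE: "regular_lang {conv u v | u v. u \<in> L \<and> v \<in> L \<and> \<phi> u = \<phi> v}"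
    and regR: "regular_lang {conv u v | u v. u \<in> L \<and> v \<in> L \<and> R (\<phi> u) (\<phi> v)}"
    using pres unfolding unary_FA_presentable_def by (elim exE conjE) (rule that; assumption)
  define Eq where "Eq = (\<lambda>u v. u \<in> L \<and> v \<in> L \<and> \<phi> u = \<phi> v)"
  define Rel where "Rel = (\<lambda>u v. u \<in> L \<and> v \<in> L \<and> R (\<phi> u) (\<phi> v))"
  have rE: "regular_lang {conv u v | u v. Eq u v}" using regE by (simp add: Eq_def)
  have rR: "regular_lang {conv u v | u v. Rel u v}" using regR by (simp add: Rel_def)
  obtain T1 P1 where tp1: "0 < P1" "\<forall>x y. kap T1 P1 x = kap T1 P1 y \<longrightarrow> (x \<in> L \<longleftrightarrow> y \<in> L)"
    using dfa_unary[OF regU] by blast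
  obtain T2 P2 where tp2: "0 < P2" "cinv T2 P2 Eq" using dfa_cinv[OF rE] by blast
  obtain T3 P3 where tp3: "0 < P3" "cinv T3 P3 Rel" using dfa_cinv[OF rR] by blast
  define T where "T = T1 + T2 + T3"
  define P where "P = P1 * P2 * P3 * (T + 1)"
  have P: "0 < P" using tp1 tp2 tp3 by (simp add: P_def)
  have TP: "T \<le> P"
  proof -
    have "1 \<le> P1 * P2 * P3" using tp1 tp2 tp3 by simp
    then have "1 * (T + 1) \<le> P1 * P2 * P3 * (T + 1)" by (rule mult_right_mono) simp
    then show ?thesis by (simp add: P_def)
  qed
  have Lk: "\<forall>x y. kap T P x = kap T P y \<longrightarrow> ((x \<in> L) = (y \<in> L))"
    by (rule periodic_mono[OF tp1(2) tp1(1) P]) (auto simp: T_def P_def)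
  have cE: "cinv T P Eq" by (rule cinv_mono[OF tp2(2) tp2(1) P]) (auto simp: T_def P_def)
  have cR: "cinv T P Rel" by (rule cinv_mono[OF tp3(2) tp3(1) P]) (auto simp: T_def P_def)

  define L' where "L' = {u \<in> L. \<forall>v<u. v \<in> L \<longrightarrow> \<phi> v \<noteq> \<phi> u}"
  have L'L: "L' \<subseteq> L" by (auto simp: L'_def)
  have injL': "inj_on \<phi> L'"
  proof (rule inj_onI)
    fix u v assume uv: "u \<in> L'" "v \<in> L'" "\<phi> u = \<phi> v"
    show "u = v"
    proof (rule ccontr)
      assume "u \<noteq> v"
      then consider "u < v" | "v < u" by linarith
      then show False
      proof cases
        case 1
        have "\<forall>w<v. w \<in> L \<longrightarrow> \<phi> w \<noteq> \<phi> v" using uv(2) by (simp add: L'_def)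
        moreover have "u \<in> L" using uv(1) L'L by blast
        ultimately show False using 1 uv(3) by blast
      next
        case 2
        have "\<forall>w<u. w \<in> L \<longrightarrow> \<phi> w \<noteq> \<phi> u" using uv(1) by (simp add: L'_def)
        moreover have "v \<in> L" using uv(2) L'L by blast
        ultimately show False using 2 uv(3) by metis
      qed
    qed
  qed
  have imgL': "\<phi> ` L' = X"
  proof
    show "\<phi> ` L' \<subseteq> X" using L'L img by auto
    show "X \<subseteq> \<phi> ` L'"
    proof
      fix x assume "x \<in> X"
      then obtain u where u: "u \<in> L" "\<phi> u = x" using img by auto
      define u0 where "u0 = (LEAST u. u \<in> L \<and> \<phi> u = x)"
      have u0: "u0 \<in> L \<and> \<phi> u0 = x" unfolding u0_def by (rule LeastI[of _ u]) (use u in auto)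
      have "\<forall>v<u0. v \<in> L \<longrightarrow> \<phi> v \<noteq> \<phi> u0"
      proof (intro allI impI)
        fix v assume v: "v < u0" "v \<in> L"
        have "\<not> (v \<in> L \<and> \<phi> v = x)" using not_less_Least[OF v(1)[unfolded u0_def]] .
        then show "\<phi> v \<noteq> \<phi> u0" using v(2) u0 by simp
      qed
      then have "u0 \<in> L'" using u0 by (simp add: L'_def)
      then show "x \<in> \<phi> ` L'" using u0 by force
    qed
  qed
  define N where "N = 2 * T + 2 * P"
  have TN: "T \<le> N" by (simp add: N_def)
  have Lper: "u' \<in> L'" if u: "u \<in> L'" "N \<le> u" "N \<le> u'" "u mod P = u' mod P" for u u'
  proof -
    have "kap T P u = kap T P u'" by (rule kap_eqI) (use u TN in auto)
    then have u'L: "u' \<in> L" using Lk u L'L by blast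
    have "\<not> (v' < u' \<and> v' \<in> L \<and> \<phi> v' = \<phi> u')" for v'
    proof
      assume v': "v' < u' \<and> v' \<in> L \<and> \<phi> v' = \<phi> u'"
      have b: "2 * T + 2 * P \<le> u'" "2 * T + 2 * P \<le> u" "u' mod P = u mod P" "v' < u'"
        using u v' by (simp_all add: N_def)
      obtain v where v: "v < u" "kap T P v' = kap T P v" "kap T P (u' - v') = kap T P (u - v)"
        using shift[OF P b] by blast
      have "Eq v' u' = Eq v u"
        by (rule cinv_le[OF cE]) (use v v' in auto)
      moreover have "Eq v' u'" using v' u'L by (simp add: Eq_def)
      ultimately have "v \<in> L" "\<phi> v = \<phi> u" by (auto simp: Eq_def)
      then show False using u(1) v(1) unfolding L'_def by auto
    qed
    then show ?thesis using u'L by (auto simp: L'_def)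
  qed
  define Res where "Res = {r. r < P \<and> N + r \<in> L'}"
  define rs where "rs = sorted_list_of_set Res"
  define n where "n = length rs"
  define Q' where "Q' = {u \<in> L'. u < N}"
  have finRes: "finite Res" by (rule finite_subset[of _ "{..<P}"]) (auto simp: Res_def)
  have setrs: "set rs = Res" using finRes by (simp add: rs_def)
  have distrs: "distinct rs" by (simp add: rs_def)
  have rsP: "rs ! k < P" "N + rs ! k \<in> L'" if "k < n" for k
    using nth_mem[of k rs] that setrs by (auto simp: n_def Res_def)
  have finQ: "finite Q'" by (rule finite_subset[of _ "{..<N}"]) (auto simp: Q'_def)
  define hh where "hh = (\<lambda>a::elt. case a of Inl q \<Rightarrow> q | Inr (k, i) \<Rightarrow> N + rs ! k + P * (i - 1))"
  have hh_simps[simp]: "hh (Inl q) = q" "hh (Inr (k, i)) = N + rs ! k + P * (i - 1)" for q k i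
    by (simp_all add: hh_def)
  have carr: "a \<in> prop_carrier Q' n \<longleftrightarrow> (\<exists>q. a = Inl q \<and> q \<in> Q') \<or> (\<exists>k i. a = Inr (k, i) \<and> k < n \<and> 1 \<le> i)" for a
    by (auto simp: prop_carrier_def)
  have hhL': "hh a \<in> L'" if aP: "a \<in> prop_carrier Q' n" for a
  proof -
    consider q where "a = Inl q" "q \<in> Q'" | k i where "a = Inr (k, i)" "k < n" "1 \<le> i" using aP[unfolded carr] by blast
    then show ?thesis
    proof cases
      case 1 then show ?thesis by (simp add: Q'_def)
    next
      case 2
      have "N + rs ! k + P * (i - 1) \<in> L'"
        by (rule Lper[OF rsP(2)[OF 2(2)]]) auto
      then show ?thesis using 2 by simp
    qed
  qed
  have bij_hh: "bij_betw hh (prop_carrier Q' n) L'"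
    unfolding bij_betw_def
  proof
    show "inj_on hh (prop_carrier Q' n)"
    proof (rule inj_onI)
      fix a b assume a: "a \<in> prop_carrier Q' n" and b: "b \<in> prop_carrier Q' n" and e: "hh a = hh b"
      consider q where "a = Inl q" "q \<in> Q'" | k i where "a = Inr (k, i)" "k < n" "1 \<le> i" using a[unfolded carr] by blast
      then show "a = b"
      proof cases
        case 1
        consider q' where "b = Inl q'" "q' \<in> Q'" | l j where "b = Inr (l, j)" "l < n" "1 \<le> j" using b[unfolded carr] by blast
        then show ?thesis
        proof cases
          case 1 then show ?thesis using \<open>a = Inl q\<close> e by simp
        next
          case 2 then show ?thesis using \<open>a = Inl q\<close> \<open>q \<in> Q'\<close> e by (simp add: Q'_def)
        qed
      next
        case 2
        note a2 = this
        consider q' where "b = Inl q'" "q' \<in> Q'" | l j where "b = Inr (l, j)" "l < n" "1 \<le> j" using b[unfolded carr] by blast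
        then show ?thesis
        proof cases
          case 1 then show ?thesis using a2 e by (simp add: Q'_def)
        next
          case 2
          have e2: "rs ! k + P * (i - 1) = rs ! l + P * (j - 1)" using a2 2 e by simp
          have "(rs ! k + P * (i - 1)) mod P = (rs ! l + P * (j - 1)) mod P" using e2 by simp
          then have r: "rs ! k = rs ! l" using rsP(1)[OF a2(2)] rsP(1)[OF 2(2)] by simp
          then have "k = l" using distrs a2(2) 2(2) nth_eq_iff_index_eq by (auto simp: n_def)
          moreover have "P * (i - 1) = P * (j - 1)" using e2 r by simp
          then have "i = j" using P a2(3) 2(3) by simp
          ultimately show ?thesis using a2(1) 2(1) by simp
        qed
      qed
    qed
    show "hh ` prop_carrier Q' n = L'"
    proof
      show "hh ` prop_carrier Q' n \<subseteq> L'" using hhL' by auto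
      show "L' \<subseteq> hh ` prop_carrier Q' n"
      proof
        fix u assume u: "u \<in> L'"
        show "u \<in> hh ` prop_carrier Q' n"
        proof (cases "u < N")
          case True
          then have "Inl u \<in> prop_carrier Q' n" using u by (simp add: inl_in Q'_def)
          then show ?thesis by force
        next
          case False
          define r where "r = (u - N) mod P"
          define t where "t = (u - N) div P"
          have ue: "u = N + r + P * t" using False by (simp add: r_def t_def)
          have rP: "r < P" using P by (simp add: r_def)
          have "N + r \<in> L'" by (rule Lper[OF u]) (use False ue in auto)
          then have "r \<in> set rs" using setrs rP by (simp add: Res_def)
          then obtain k where k: "k < n" "rs ! k = r" by (auto simp: in_set_conv_nth n_def)
          have "Inr (k, t + 1) \<in> prop_carrier Q' n" using k by (simp add: carr)
          moreover have "hh (Inr (k, t + 1)) = u" using k ue by simp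
          ultimately show ?thesis by force
        qed
      qed
    qed
  qed
  define \<rho> where "\<rho> = (\<lambda>a b. Rel (hh a) (hh b))"
  have \<rho>R: "\<rho> a b = R (\<phi> (hh a)) (\<phi> (hh b))" if "a \<in> prop_carrier Q' n" "b \<in> prop_carrier Q' n" for a b
    using hhL'[OF that(1)] hhL'[OF that(2)] L'L by (auto simp: \<rho>_def Rel_def)
  have agr: "agree Q' n \<rho>"
    unfolding agree_def
  proof (intro ballI)
    fix a b assume a: "a \<in> prop_carrier Q' n" and b: "b \<in> prop_carrier Q' n"
    consider q where "a = Inl q" "q \<in> Q'" | k i where "a = Inr (k, i)" "k < n" "1 \<le> i" using a[unfolded carr] by blast
    then show "prop_rel \<rho> a b = \<rho> a b"
    proof cases
      case 1
      note a1 = this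
      have qN: "q < N" using a1 by (simp add: Q'_def)
      consider q' where "b = Inl q'" "q' \<in> Q'" | l j where "b = Inr (l, j)" "l < n" "1 \<le> j" using b[unfolded carr] by blast
      then show ?thesis
      proof cases
        case 1 then show ?thesis using a1 by simp
      next
        case 2
        show ?thesis
        proof (cases "j = 1")
          case True then show ?thesis using a1 2 by simp
        next
          case False
          have "Rel q (N + rs ! l + P * (j - 1)) = Rel q (N + rs ! l + P)"
            by (rule block_q[OF cR P TP qN]) (use False 2 in auto)
          then show ?thesis using a1 2 False by (simp add: \<rho>_def)
        qed
      qed
    next
      case 2
      note a2 = this
      consider q' where "b = Inl q'" "q' \<in> Q'" | l j where "b = Inr (l, j)" "l < n" "1 \<le> j" using b[unfolded carr] by blast
      then show ?thesis
      proof cases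
        case 1
        have qN: "q' < N" using 1 by (simp add: Q'_def)
        show ?thesis
        proof (cases "i = 1")
          case True then show ?thesis using a2 1 by simp
        next
          case False
          have "Rel (N + rs ! k + P * (i - 1)) q' = Rel (N + rs ! k + P) q'"
            by (rule block_q_back[OF cR P TP qN]) (use False a2 in auto)
          then show ?thesis using a2 1 False by (simp add: \<rho>_def)
        qed
      next
        case 2
        define r where "r = rs ! k"
        define s where "s = rs ! l"
        have rP: "r < P" "s < P" using rsP(1) a2(2) 2(2) by (auto simp: r_def s_def)
        define a0 where "a0 = i - 1"
        define b0 where "b0 = j - 1"
        have ij: "i = a0 + 1" "j = b0 + 1" using a2(3) 2(3) by (auto simp: a0_def b0_def)
        have lhs: "\<rho> a b = Rel (N + r + P * a0) (N + s + P * b0)"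
          using a2(1) 2(1) by (simp add: \<rho>_def r_def s_def a0_def b0_def)
        have r11: "\<rho> (seed k 1) (seed l 1) = Rel (N + r) (N + s)" by (simp add: \<rho>_def r_def s_def)
        have r12: "\<rho> (seed k 1) (seed l 2) = Rel (N + r) (N + s + P)" by (simp add: \<rho>_def r_def s_def)
        have r21: "\<rho> (seed k 2) (seed l 1) = Rel (N + r + P) (N + s)" by (simp add: \<rho>_def r_def s_def)
        have r13: "\<rho> (seed k 1) (seed l 3) = Rel (N + r) (N + s + 2 * P)" by (simp add: \<rho>_def r_def s_def mult.commute)
        have r31: "\<rho> (seed k 3) (seed l 1) = Rel (N + r + 2 * P) (N + s)" by (simp add: \<rho>_def r_def s_def mult.commute)
        have pr: "prop_rel \<rho> a b = (if b0 = a0 then \<rho> (seed k 1) (seed l 1)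
            else if b0 = a0 + 1 then \<rho> (seed k 1) (seed l 2)
            else if b0 + 1 = a0 then \<rho> (seed k 2) (seed l 1)
            else if a0 + 2 \<le> b0 then \<rho> (seed k 1) (seed l 3) else \<rho> (seed k 3) (seed l 1))"
          using a2(1) 2(1) ij by auto
        consider "b0 = a0" | "b0 = a0 + 1" | "b0 + 1 = a0" | "a0 + 2 \<le> b0" | "b0 + 2 \<le> a0" by linarith
        then show ?thesis
        proof cases
          case 1
          then show ?thesis using pr lhs r11 block_eq[OF cR P TN rP, of a0] by simp
        next
          case 2
          then show ?thesis using pr lhs r12 block_next[OF cR P TN rP, of a0] by simp
        next
          case 3
          then show ?thesis using pr lhs r21 block_prev[OF cR P TN rP, of b0] by simp
        next
          case 4
          then show ?thesis using pr lhs r13 block_far[OF cR P TN TP rP 4] by simp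
        next
          case 5
          then show ?thesis using pr lhs r31 block_far_back[OF cR P TN TP rP 5] by simp
        qed
      qed
    qed
  qed
  have FA: "FA_foundational Q' n \<rho>" by (rule FA_from_agree[OF finQ agr])
  have fsub: "found_carrier Q' n \<subseteq> prop_carrier Q' n"
    by (auto simp: found_carrier_def prop_carrier_def)
  have Xin: "\<phi> (hh a) \<in> X" if "a \<in> prop_carrier Q' n" for a
    using hhL'[OF that] imgL' by auto
  have QO: "quasi_order_on (found_carrier Q' n) \<rho>"
    unfolding quasi_order_on_def
  proof (intro conjI ballI impI)
    fix x assume "x \<in> found_carrier Q' n"
    then have x: "x \<in> prop_carrier Q' n" using fsub by auto
    show "\<rho> x x" using \<rho>R[OF x x] Xin[OF x] qo unfolding quasi_order_on_def by auto
  next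
    fix x y z assume "x \<in> found_carrier Q' n" "y \<in> found_carrier Q' n" "z \<in> found_carrier Q' n"
      and xy: "\<rho> x y" and yz: "\<rho> y z"
    then have x: "x \<in> prop_carrier Q' n" "y \<in> prop_carrier Q' n" "z \<in> prop_carrier Q' n" using fsub by auto
    have "R (\<phi> (hh x)) (\<phi> (hh y))" "R (\<phi> (hh y)) (\<phi> (hh z))" using xy yz \<rho>R x by auto
    then have "R (\<phi> (hh x)) (\<phi> (hh z))" using qo Xin x unfolding quasi_order_on_def by blast
    then show "\<rho> x z" using \<rho>R x by auto
  qed
  have shapes: "seed_antichain \<rho> k \<or> seed_ascending \<rho> k \<or> seed_descending \<rho> k \<or> seed_scc \<rho> k"
    if k: "k < n" for k
  proof (rule shape_from_agree[OF agr k])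
    have s1: "seed k 1 \<in> prop_carrier Q' n" using k by (simp add: seed_in)
    show "\<rho> (seed k 1) (seed k 1)" using \<rho>R[OF s1 s1] Xin[OF s1] qo unfolding quasi_order_on_def by auto
    define r where "r = rs ! k"
    have kpp: "kap T P (N + r + P - (N + r)) = kap T P (N + r + 2 * P - (N + r))"
      by (rule kap_eqI) (use TP in auto)
    have "Rel (N + r) (N + r + P) = Rel (N + r) (N + r + 2 * P)"
      by (rule cinv_le[OF cR]) (use kpp in auto)
    then show "\<rho> (seed k 1) (seed k 2) = \<rho> (seed k 1) (seed k 3)" by (simp add: \<rho>_def r_def mult.commute)
    have "Rel (N + r + P) (N + r) = Rel (N + r + 2 * P) (N + r)"
      by (rule cinv_ge[OF cR]) (use kpp in auto)
    then show "\<rho> (seed k 2) (seed k 1) = \<rho> (seed k 3) (seed k 1)" by (simp add: \<rho>_def r_def mult.commute)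
  qed
  define F where "F = (\<lambda>a. \<phi> (hh a))"
  have bijF: "bij_betw F (prop_carrier Q' n) X"
  proof -
    have "bij_betw \<phi> L' X" using injL' imgL' by (simp add: bij_betw_def)
    then show ?thesis using bij_betw_trans[OF bij_hh] by (simp add: F_def comp_def)
  qed
  define f where "f = inv_into (prop_carrier Q' n) F"
  have bijf: "bij_betw f X (prop_carrier Q' n)" unfolding f_def by (rule bij_betw_inv_into[OF bijF])
  have iso: "isomorphic X R (prop_carrier Q' n) (prop_rel \<rho>)"
    unfolding isomorphic_def
  proof (intro exI[of _ f] conjI ballI)
    show "bij_betw f X (prop_carrier Q' n)" by (rule bijf)
  next
    fix x y assume x: "x \<in> X" and y: "y \<in> X"
    have fx: "f x \<in> prop_carrier Q' n" "f y \<in> prop_carrier Q' n" using bijf x y by (auto simp: bij_betw_def)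
    have Ffx: "F (f x) = x" "F (f y) = y"
      using x y bijF unfolding f_def by (auto simp: bij_betw_def f_inv_into_f)
    have "prop_rel \<rho> (f x) (f y) = \<rho> (f x) (f y)" using agr fx unfolding agree_def by blast
    also have "\<dots> = R (F (f x)) (F (f y))" using \<rho>R[OF fx] by (simp add: F_def)
    finally show "R x y = prop_rel \<rho> (f x) (f y)" using Ffx by simp
  qed
  show ?thesis
    using FA QO shapes iso unfolding FA_foundational_quasi_order_def by blast
qed

lemma pr_up: "prop_rel \<rho> (Inr (k, i)) (Inr (l, i + e)) =
   (if e = 0 then \<rho> (seed k 1) (seed l 1) else if e = 1 then \<rho> (seed k 1) (seed l 2) else \<rho> (seed k 1) (seed l 3))"
  by auto

lemma pr_down: "prop_rel \<rho> (Inr (l, i + e)) (Inr (k, i)) =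
   (if e = 0 then \<rho> (seed l 1) (seed k 1) else if e = 1 then \<rho> (seed l 2) (seed k 1) else \<rho> (seed l 3) (seed k 1))"
  by auto

lemma div_split:
  fixes x d n :: nat
  shows "(x + d) div n = x div n + (x mod n + d) div n" "(x + d) mod n = (x mod n + d) mod n"
proof -
  have x: "x + d = n * (x div n) + (x mod n + d)" by simp
  show "(x + d) mod n = (x mod n + d) mod n" by (simp add: mod_add_left_eq)
  show "(x + d) div n = x div n + (x mod n + d) div n"
  proof (cases "n = 0")
    case True then show ?thesis by simp
  next
    case False
    have x2: "x + d = (x mod n + d) + (x div n) * n" by simp
    show ?thesis unfolding x2 using div_mult_self1[OF False, of "x mod n + d" "x div n"] by simp
  qed
qed

definition decf :: "nat \<Rightarrow> nat \<Rightarrow> nat \<Rightarrow> elt" where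
  "decf M n x = (if x < M then Inl x else Inr ((x - M) mod n, (x - M) div n + 1))"

lemma dec_core:
  fixes M n :: nat and \<rho>
  defines "T \<equiv> M + 2 * n + 1" and "P \<equiv> (if n = 0 then 1 else n)"
  assumes "a \<le> b" "a' \<le> b'" "kap T P a = kap T P a'" "kap T P (b - a) = kap T P (b' - a')"
    and "a < M \<or> 0 < n" "b < M \<or> 0 < n"
  shows "prop_rel \<rho> (decf M n a) (decf M n b) = prop_rel \<rho> (decf M n a') (decf M n b') \<and>
         prop_rel \<rho> (decf M n b) (decf M n a) = prop_rel \<rho> (decf M n b') (decf M n a')"
proof -
  have P: "0 < P" by (simp add: P_def)
  define d where "d = b - a"
  define d' where "d' = b' - a'"
  have bd: "b = a + d" "b' = a' + d'" using assms by (auto simp: d_def d'_def)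
  have kd: "d = d' \<or> (T \<le> d \<and> T \<le> d' \<and> d mod P = d' mod P)"
    using assms(6) kap_eq_iff[OF P] by (simp add: d_def d'_def)
  have ka: "a = a' \<or> (T \<le> a \<and> T \<le> a' \<and> a mod P = a' mod P)"
    using assms(5) kap_eq_iff[OF P] by simp
  show ?thesis
  proof (cases "a < M")
    case True
    then have aa: "a' = a" using ka by (auto simp: T_def)
    show ?thesis
    proof (cases "d = d'")
      case True then show ?thesis using aa bd by simp
    next
      case False
      then have dT: "T \<le> d" "T \<le> d'" "d mod P = d' mod P" using kd by auto
      have n: "0 < n" using assms(8) bd dT by (auto simp: T_def)
      have Pn: "P = n" using n by (simp add: P_def)
      have bM: "\<not> b < M" "\<not> b' < M" "M + 2 * n + 1 \<le> b" "M + 2 * n + 1 \<le> b'"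
        using bd dT aa by (auto simp: T_def)
      have bmod: "b mod n = b' mod n"
      proof -
        have "(a + d) mod n = (a + d') mod n" by (rule mod_add_cong) (use dT Pn in simp_all)
        then show ?thesis using bd aa by simp
      qed
      have kk: "(b - M) mod n = (b' - M) mod n"
        by (rule mod_diff_cong2) (use bM bmod in auto)
      have i2: "(b - M) div n + 1 \<noteq> 1" "(b' - M) div n + 1 \<noteq> 1"
      proof -
        have "n \<le> b - M" "n \<le> b' - M" using bM by auto
        then show "(b - M) div n + 1 \<noteq> 1" "(b' - M) div n + 1 \<noteq> 1" using n
          by (auto simp: div_eq_0_iff)
      qed
      have "decf M n a = Inl a" "decf M n a' = Inl a" using True aa by (simp_all add: decf_def)
      moreover have "decf M n b = Inr ((b - M) mod n, (b - M) div n + 1)"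
        "decf M n b' = Inr ((b' - M) mod n, (b' - M) div n + 1)" using bM by (simp_all add: decf_def)
      ultimately show ?thesis using i2 kk by simp
    qed
  next
    case False
    note aM = this
    have n: "0 < n" using assms(7) aM by simp
    have Pn: "P = n" using n by (simp add: P_def)
    have aM': "\<not> a' < M" using ka aM by (auto simp: T_def)
    define k where "k = (a - M) mod n"
    have kk: "(a' - M) mod n = k"
    proof (cases "a = a'")
      case True then show ?thesis by (simp add: k_def)
    next
      case False
      then have "T \<le> a" "T \<le> a'" "a mod n = a' mod n" using ka Pn by auto
      then show ?thesis unfolding k_def by (intro mod_diff_cong2) (auto simp: T_def)
    qed
    define e where "e = (k + d) div n"
    define e' where "e' = (k + d') div n"
    have dm: "d mod n = d' mod n" using kd Pn by auto
    have le: "(k + d) mod n = (k + d') mod n" by (rule mod_add_cong) (use dm in simp_all)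
    have ee: "(e = 0 \<longleftrightarrow> e' = 0) \<and> (e = 1 \<longleftrightarrow> e' = 1)"
    proof (cases "d = d'")
      case True then show ?thesis by (simp add: e_def e'_def)
    next
      case False
      then have "T \<le> d" "T \<le> d'" using kd by auto
      then have "2 * n \<le> k + d" "2 * n \<le> k + d'" by (auto simp: T_def)
      then have "(2 * n) div n \<le> e" "(2 * n) div n \<le> e'" unfolding e_def e'_def
        using div_le_mono by blast+
      then have "2 \<le> e" "2 \<le> e'" using n by simp_all
      then show ?thesis by auto
    qed
    have da: "decf M n a = Inr (k, (a - M) div n + 1)" using aM by (simp add: decf_def k_def)
    have da': "decf M n a' = Inr (k, (a' - M) div n + 1)" using aM' kk by (simp add: decf_def)
    have db: "decf M n b = Inr ((k + d) mod n, (a - M) div n + 1 + e)"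
    proof -
      have "b - M = (a - M) + d" using bd aM by simp
      then show ?thesis using aM bd div_split[of "a - M" d n] by (simp add: decf_def k_def e_def)
    qed
    have db': "decf M n b' = Inr ((k + d') mod n, (a' - M) div n + 1 + e')"
    proof -
      have "b' - M = (a' - M) + d'" using bd aM' by simp
      then show ?thesis using aM' bd div_split[of "a' - M" d' n] kk by (simp add: decf_def e'_def)
    qed
    show ?thesis unfolding da da' db db' pr_up pr_down using ee le by simp
  qed
qed

lemma inv2I:
  assumes "\<And>a b a' b'. a \<le> b \<Longrightarrow> a' \<le> b' \<Longrightarrow> kap T P a = kap T P a' \<Longrightarrow>
     kap T P (b - a) = kap T P (b' - a') \<Longrightarrow> Sr a b = Sr a' b' \<and> Sr b a = Sr b' a'"
  shows "inv2 T P Sr"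
  unfolding inv2_def
proof (intro allI conjI impI)
  fix u v u' v'
  assume "u \<le> v \<and> u' \<le> v' \<and> kap T P u = kap T P u' \<and> kap T P (v - u) = kap T P (v' - u')"
  then show "Sr u v = Sr u' v'" using assms by blast
next
  fix u v u' v'
  assume "v \<le> u \<and> v' \<le> u' \<and> kap T P v = kap T P v' \<and> kap T P (u - v) = kap T P (u' - v')"
  then show "Sr u v = Sr u' v'" using assms by blast
qed

lemma rl:
  fixes X :: "'a set" and R :: "'a \<Rightarrow> 'a \<Rightarrow> bool"
  assumes FA: "FA_foundational_quasi_order Q' n \<rho>"
    and iso: "isomorphic X R (prop_carrier Q' n) (prop_rel \<rho>)"
  shows "unary_FA_presentable X R"
proof -
  have finQ: "finite Q'" using FA by (simp add: FA_foundational_quasi_order_def FA_foundational_def)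
  obtain f where bijf: "bij_betw f X (prop_carrier Q' n)"
    and rel: "\<forall>x\<in>X. \<forall>y\<in>X. R x y \<longleftrightarrow> prop_rel \<rho> (f x) (f y)"
    using iso unfolding isomorphic_def by blast
  obtain M where QM: "\<forall>q\<in>Q'. q < M" using finQ finite_nat_set_iff_bounded by blast
  define dec where "dec = decf M n"
  define L where "L = {x. x < M \<and> x \<in> Q'} \<union> {x. M \<le> x \<and> 0 < n}"
  have bij_dec: "bij_betw dec L (prop_carrier Q' n)"
    unfolding bij_betw_def
  proof
    show "inj_on dec L"
    proof (rule inj_onI)
      fix x y assume x: "x \<in> L" and y: "y \<in> L" and e: "dec x = dec y"
      show "x = y"
      proof (cases "x < M")
        case True
        then show ?thesis using e by (cases "y < M") (auto simp: dec_def decf_def)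
      next
        case False
        note xM = this
        show ?thesis
        proof (cases "y < M")
          case True then show ?thesis using e xM by (auto simp: dec_def decf_def)
        next
          case False
          then have m: "(x - M) mod n = (y - M) mod n" "(x - M) div n = (y - M) div n"
            using e xM by (auto simp: dec_def decf_def)
          have "x - M = y - M" using m by (metis div_mult_mod_eq)
          then show ?thesis using xM False by simp
        qed
      qed
    qed
    show "dec ` L = prop_carrier Q' n"
    proof
      show "dec ` L \<subseteq> prop_carrier Q' n"
      proof
        fix a assume "a \<in> dec ` L"
        then obtain x where x: "x \<in> L" "a = dec x" by blast
        show "a \<in> prop_carrier Q' n"
        proof (cases "x < M")
          case True then show ?thesis using x by (auto simp: dec_def decf_def L_def inl_in)
        next
          case False
          then have n: "0 < n" using x by (auto simp: L_def)
          then show ?thesis using x False by (simp add: dec_def decf_def seed_in)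
        qed
      qed
      show "prop_carrier Q' n \<subseteq> dec ` L"
      proof
        fix a assume a: "a \<in> prop_carrier Q' n"
        then consider q where "a = Inl q" "q \<in> Q'" | k i where "a = Inr (k, i)" "k < n" "1 \<le> i"
          by (auto simp: prop_carrier_def)
        then show "a \<in> dec ` L"
        proof cases
          case 1
          then have "q < M" using QM by blast
          then have "q \<in> L" "dec q = a" using 1 by (auto simp: L_def dec_def decf_def)
          then show ?thesis by blast
        next
          case 2
          define x where "x = M + k + n * (i - 1)"
          have "x \<in> L" using 2 by (auto simp: L_def x_def)
          moreover have "dec x = a" using 2 by (simp add: dec_def decf_def x_def)
          ultimately show ?thesis by blast
        qed
      qed
    qed
  qed
  define g where "g = inv_into X f"
  have bijg: "bij_betw g (prop_carrier Q' n) X" unfolding g_def by (rule bij_betw_inv_into[OF bijf])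
  define \<phi> where "\<phi> = (\<lambda>u. g (dec u))"
  have bij\<phi>: "bij_betw \<phi> L X" using bij_betw_trans[OF bij_dec bijg] by (simp add: \<phi>_def comp_def)
  have decin: "u \<in> L \<Longrightarrow> dec u \<in> prop_carrier Q' n" for u using bij_dec by (auto simp: bij_betw_def)
  have f\<phi>: "f (\<phi> u) = dec u" if "u \<in> L" for u
  proof -
    have "dec u \<in> f ` X" using decin[OF that] bijf by (simp add: bij_betw_def)
    then show ?thesis by (simp add: \<phi>_def g_def f_inv_into_f)
  qed
  have \<phi>X: "u \<in> L \<Longrightarrow> \<phi> u \<in> X" for u using bij\<phi> by (auto simp: bij_betw_def)
  define T where "T = M + 2 * n + 1"
  define P where "P = (if n = 0 then 1 else (n::nat))"
  have P: "0 < P" by (simp add: P_def)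
  have T0: "0 < T" by (simp add: T_def)
  have Lk: "\<forall>x y. kap T P x = kap T P y \<longrightarrow> (x \<in> L \<longleftrightarrow> y \<in> L)"
  proof (intro allI impI)
    fix x y assume "kap T P x = kap T P y"
    then have "x = y \<or> (T \<le> x \<and> T \<le> y)" using kap_eq_iff[OF P] by blast
    then show "x \<in> L \<longleftrightarrow> y \<in> L" by (auto simp: L_def T_def)
  qed
  have Lk2: "kap T P x = kap T P y \<Longrightarrow> (x \<in> L \<longleftrightarrow> y \<in> L)" for x y using Lk by blast
  have memb: "(b \<in> L) = (b' \<in> L)" if "a \<le> b" "a' \<le> b'" "kap T P a = kap T P a'"
    "kap T P (b - a) = kap T P (b' - a')" for a b a' b'
  proof -
    have "kap T P (a + (b - a)) = kap T P (a' + (b' - a'))" by (rule kap_add[OF P that(3,4)])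
    then have "kap T P b = kap T P b'" using that(1,2) by simp
    then show ?thesis using Lk2 by blast
  qed
  have regU: "regular_lang (unary_word ` L)" by (rule reg_unary[OF P Lk])
  have img: "\<phi> ` L = X" using bij\<phi> by (simp add: bij_betw_def)
  have injphi: "inj_on \<phi> L" using bij\<phi> by (simp add: bij_betw_def)
  have eqset: "{conv u v | u v. u \<in> L \<and> v \<in> L \<and> \<phi> u = \<phi> v} = {conv u v | u v. (\<lambda>u v. u \<in> L \<and> v \<in> L \<and> u = v) u v}"
  proof (intro set_eqI iffI)
    fix w assume "w \<in> {conv u v | u v. u \<in> L \<and> v \<in> L \<and> \<phi> u = \<phi> v}"
    then obtain u v where uv: "w = conv u v" "u \<in> L" "v \<in> L" "\<phi> u = \<phi> v" by blast
    then have "u = v" using inj_onD[OF injphi] by blast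
    then show "w \<in> {conv u v | u v. (\<lambda>u v. u \<in> L \<and> v \<in> L \<and> u = v) u v}" using uv by blast
  next
    fix w assume "w \<in> {conv u v | u v. (\<lambda>u v. u \<in> L \<and> v \<in> L \<and> u = v) u v}"
    then obtain u where "w = conv u u" "u \<in> L" by blast
    then show "w \<in> {conv u v | u v. u \<in> L \<and> v \<in> L \<and> \<phi> u = \<phi> v}" by blast
  qed
  have invE: "inv2 T P (\<lambda>u v. u \<in> L \<and> v \<in> L \<and> u = v)"
  proof (rule inv2I)
    fix a b a' b' assume h: "a \<le> b" "a' \<le> b'" "kap T P a = kap T P a'" "kap T P (b - a) = kap T P (b' - a')"
    have m1: "a \<in> L \<longleftrightarrow> a' \<in> L" using Lk2[OF h(3)] .
    have m2: "b \<in> L \<longleftrightarrow> b' \<in> L" using memb[OF h] .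
    have z: "(b - a = 0) \<longleftrightarrow> (b' - a' = 0)"
      using h(4) kap_eq0[OF _ T0] by (metis kap_0)
    have "a = b \<longleftrightarrow> a' = b'" using z h(1,2) by auto
    then show "(a \<in> L \<and> b \<in> L \<and> a = b) = (a' \<in> L \<and> b' \<in> L \<and> a' = b') \<and>
               (b \<in> L \<and> a \<in> L \<and> b = a) = (b' \<in> L \<and> a' \<in> L \<and> b' = a')"
      using m1 m2 by auto
  qed
  have regE: "regular_lang {conv u v | u v. u \<in> L \<and> v \<in> L \<and> \<phi> u = \<phi> v}"
    unfolding eqset by (rule reg_conv[OF P invE])
  define SR where "SR = (\<lambda>u v. u \<in> L \<and> v \<in> L \<and> prop_rel \<rho> (dec u) (dec v))"
  have Rset: "{conv u v | u v. u \<in> L \<and> v \<in> L \<and> R (\<phi> u) (\<phi> v)} = {conv u v | u v. SR u v}"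
  proof -
    have "u \<in> L \<Longrightarrow> v \<in> L \<Longrightarrow> R (\<phi> u) (\<phi> v) = prop_rel \<rho> (dec u) (dec v)" for u v
      using rel \<phi>X f\<phi> by simp
    then show ?thesis unfolding SR_def by blast
  qed
  have invR: "inv2 T P SR"
  proof (rule inv2I)
    fix a b a' b' assume h: "a \<le> b" "a' \<le> b'" "kap T P a = kap T P a'" "kap T P (b - a) = kap T P (b' - a')"
    have m1: "a \<in> L \<longleftrightarrow> a' \<in> L" using Lk2[OF h(3)] .
    have m2: "b \<in> L \<longleftrightarrow> b' \<in> L" using memb[OF h] .
    show "SR a b = SR a' b' \<and> SR b a = SR b' a'"
    proof (cases "a \<in> L \<and> b \<in> L")
      case True
      have c1: "a < M \<or> 0 < n" "b < M \<or> 0 < n" using True by (auto simp: L_def)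
      have "prop_rel \<rho> (decf M n a) (decf M n b) = prop_rel \<rho> (decf M n a') (decf M n b') \<and>
         prop_rel \<rho> (decf M n b) (decf M n a) = prop_rel \<rho> (decf M n b') (decf M n a')"
        by (rule dec_core[of a b a' b' M n]) (use h c1 in \<open>simp_all add: T_def P_def\<close>)
      then show ?thesis using True m1 m2 by (simp add: SR_def dec_def)
    next
      case False
      then show ?thesis using m1 m2 by (auto simp: SR_def)
    qed
  qed
  have regR: "regular_lang {conv u v | u v. u \<in> L \<and> v \<in> L \<and> R (\<phi> u) (\<phi> v)}"
    unfolding Rset by (rule reg_conv[OF P invR])
  show ?thesis unfolding unary_FA_presentable_def
    using regU img regE regR by blast
qed

theorem theorem5p8:
  fixes X :: "'a set" and R :: "'a \<Rightarrow> 'a \<Rightarrow> bool"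
  assumes "quasi_order_on X R"
  shows "unary_FA_presentable X R \<longleftrightarrow>
    (\<exists>(Q'::nat set) (n::nat) (\<rho>::elt \<Rightarrow> elt \<Rightarrow> bool).
       FA_foundational_quasi_order Q' n \<rho> \<and>
       (\<forall>k<n. seed_antichain \<rho> k \<or> seed_ascending \<rho> k \<or>
              seed_descending \<rho> k \<or> seed_scc \<rho> k) \<and>
       isomorphic X R (prop_carrier Q' n) (prop_rel \<rho>))"
proof
  assume "unary_FA_presentable X R"
  then show "\<exists>(Q'::nat set) (n::nat) (\<rho>::elt \<Rightarrow> elt \<Rightarrow> bool).
       FA_foundational_quasi_order Q' n \<rho> \<and>
       (\<forall>k<n. seed_antichain \<rho> k \<or> seed_ascending \<rho> k \<or>
              seed_descending \<rho> k \<or> seed_scc \<rho> k) \<and>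
       isomorphic X R (prop_carrier Q' n) (prop_rel \<rho>)"
    by (rule lr[OF assms])
next
  assume "\<exists>(Q'::nat set) (n::nat) (\<rho>::elt \<Rightarrow> elt \<Rightarrow> bool).
       FA_foundational_quasi_order Q' n \<rho> \<and>
       (\<forall>k<n. seed_antichain \<rho> k \<or> seed_ascending \<rho> k \<or>
              seed_descending \<rho> k \<or> seed_scc \<rho> k) \<and>
       isomorphic X R (prop_carrier Q' n) (prop_rel \<rho>)"
  then obtain Q' n \<rho> where "FA_foundational_quasi_order Q' n \<rho>"
    "isomorphic X R (prop_carrier Q' n) (prop_rel \<rho>)" by blast
  then show "unary_FA_presentable X R" by (rule rl)
qed

end
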